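(* Fix a total order on the subsets of $\mathbb N_n$, for instance the lexicographic order, and write $I<J$ accordingly. The family $$\mathfrak B^{\mathbb R}=\{2^{-n/2}b_K: K\subseteq\mathbb N_n\}\ \cup\ \Big\{\tfrac{b_K(\mathbf c_{I,J}+\mathbf c_{J,I})}{2^{(n+1-|I\cup J|)/2}},\ \tfrac{-i\,b_K(\mathbf c_{I,J}-\mathbf c_{J,I})}{2^{(n+1-|I\cup J|)/2}}:\ K,I,J\subseteq\mathbb N_n \text{ mutually disjoint},\ I<J\Big\}$$ consists of self-adjoint operators and is an orthonormal $\mathbb C$-basis of $\mathcal L^2(\mathcal F)$. Moreover, for every $k\in\mathbb N_0$, the set $\mathfrak B^{\mathbb R}\cap\mathcal O_k^{\mathrm{sa}}$ is an orthonormal $\mathbb R$-basis of $\mathcal O_k^{\mathrm{sa}}$. Explicitly, it consists of two kinds of elements: - the elements $2^{-n/2}b_K$ with $|K|\le k$; - the elements of the second set above with $|I|+|J|+2|K|=2l$ for some $0\le l\le k$.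
   Context: Let $\mathfrak h$ be a complex Hilbert space of dimension $n<\infty$ with orthonormal basis $\varphi_1,\dots,\varphi_n$, and $\mathbb N_n=\{1,\dots,n\}$. $\mathcal F=\bigoplus_k\bigwedge^k\mathfrak h$ is the fermion Fock space. For $\omega\in\mathcal F$, $\mathbf c^*(\omega)\xi=\omega\wedge\xi$ and $\mathbf c(\omega)=\mathbf c^*(\omega)^*$. For $A=\{a_1<\dots<a_k\}$, $\varphi_A=\varphi_{a_1}\wedge\cdots\wedge\varphi_{a_k}$ (with $\varphi_\emptyset$ the vacuum). Put $\mathbf c^*_A=\mathbf c^*(\varphi_A)$, $\mathbf c_A=\mathbf c(\varphi_A)$, $\mathbf c_{A,B}=\mathbf c^*_A\mathbf c_B$, and $\mathbf n_A=\mathbf c_{A,A}$. For $K\subseteq\mathbb N_n$ let $b_K=\sum_{I\subseteq K}(-2)^{|I|}\mathbf n_I$. $\mathcal L^2(\mathcal F)$ is the space of operators on $\mathcal F$ with $\langle a,b\rangle=\operatorname{tr}(a^*b)$. $\mathcal O_k$, the space of $k$-body operators, is the complex span of all $\mathbf c^*(\omega)\mathbf c(\eta)$ with $\omega\in\bigwedge^r\mathfrak h$, $\eta\in\bigwedge^s\mathfrak h$, and $r+s=2l$ for some $0\le l\le k$. $\mathcal O_k^{\mathrm{sa}}$ is the real subspace of self-adjoint elements of $\mathcal O_k$. *)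

theory Defs
  imports "HOL-Analysis.Analysis" "HOL-Library.Function_Algebras"
begin

text \<open>The Fock space over h = C^n (basis phi_1..phi_n) has orthonormal basis
  phi_A, A a subset of {1..n}. Vectors/forms are coefficient functions on subsets; operators
  are represented by their matrices M X Y = < phi_X , M phi_Y >, supported on subsets of {1..n}.\<close>

type_synonym fop = "nat set \<Rightarrow> nat set \<Rightarrow> complex"

definition Nn :: "nat \<Rightarrow> nat set" where "Nn n = {1..n}"

definition smul :: "complex \<Rightarrow> fop \<Rightarrow> fop" where
  "smul c M = (\<lambda>X Y. c * M X Y)"

definition adj :: "fop \<Rightarrow> fop" where
  "adj M = (\<lambda>X Y. cnj (M Y X))"

definition mmul :: "nat \<Rightarrow> fop \<Rightarrow> fop \<Rightarrow> fop" where
  "mmul n M N = (\<lambda>X Y. \<Sum>Z\<in>Pow (Nn n). M X Z * N Z Y)"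

text \<open>The space L^2(F) of (all) operators on F, with inner product tr(a^* b).\<close>
definition L2 :: "nat \<Rightarrow> fop set" where
  "L2 n = {M. \<forall>X Y. M X Y \<noteq> 0 \<longrightarrow> X \<subseteq> Nn n \<and> Y \<subseteq> Nn n}"

definition hs_inner :: "nat \<Rightarrow> fop \<Rightarrow> fop \<Rightarrow> complex" where
  "hs_inner n a b = (\<Sum>X\<in>Pow (Nn n). \<Sum>Y\<in>Pow (Nn n). cnj (a X Y) * b X Y)"

text \<open>Sign of phi_A wedge phi_B relative to phi_(A union B) (A, B disjoint):
  (-1) to the number of inversions.\<close>
definition wsign :: "nat set \<Rightarrow> nat set \<Rightarrow> complex" where
  "wsign A B = (-1) ^ card {(a, b). a \<in> A \<and> b \<in> B \<and> b < a}"

text \<open>Creation operator c^*_A = c^*(phi_A): xi \<mapsto> phi_A wedge xi.\<close>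
definition cstarA :: "nat \<Rightarrow> nat set \<Rightarrow> fop" where
  "cstarA n A = (\<lambda>X Y. if A \<subseteq> Nn n \<and> Y \<subseteq> Nn n \<and> A \<inter> Y = {} \<and> X = A \<union> Y
                        then wsign A Y else 0)"

text \<open>The r-th exterior power of h: coefficient functions supported on r-subsets.\<close>
definition wedge :: "nat \<Rightarrow> nat \<Rightarrow> (nat set \<Rightarrow> complex) set" where
  "wedge n r = {w. \<forall>A. w A \<noteq> 0 \<longrightarrow> A \<subseteq> Nn n \<and> card A = r}"

definition cstar :: "nat \<Rightarrow> (nat set \<Rightarrow> complex) \<Rightarrow> fop" where
  "cstar n w = (\<Sum>A\<in>Pow (Nn n). smul (w A) (cstarA n A))"

definition cann :: "nat \<Rightarrow> (nat set \<Rightarrow> complex) \<Rightarrow> fop" where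
  "cann n w = adj (cstar n w)"

definition cc :: "nat \<Rightarrow> nat set \<Rightarrow> nat set \<Rightarrow> fop" where
  "cc n A B = mmul n (cstarA n A) (adj (cstarA n B))"

definition nA :: "nat \<Rightarrow> nat set \<Rightarrow> fop" where
  "nA n A = cc n A A"

definition bK :: "nat \<Rightarrow> nat set \<Rightarrow> fop" where
  "bK n K = (\<Sum>I\<in>Pow K. smul ((-2) ^ card I) (nA n I))"

definition cspan :: "fop set \<Rightarrow> fop set" where
  "cspan G = {M. \<exists>S c. finite S \<and> S \<subseteq> G \<and> M = (\<Sum>v\<in>S. smul (c v) v)}"

definition rspan :: "fop set \<Rightarrow> fop set" where
  "rspan G = {M. \<exists>S (c :: fop \<Rightarrow> real). finite S \<and> S \<subseteq> G \<and>
                  M = (\<Sum>v\<in>S. smul (complex_of_real (c v)) v)}"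

definition Ok :: "nat \<Rightarrow> nat \<Rightarrow> fop set" where
  "Ok n k = cspan {mmul n (cstar n w) (cann n e) | w e r s l.
                    w \<in> wedge n r \<and> e \<in> wedge n s \<and> r + s = 2 * l \<and> l \<le> k}"

definition Osa :: "nat \<Rightarrow> nat \<Rightarrow> fop set" where
  "Osa n k = {M \<in> Ok n k. adj M = M}"

datatype bidx = BD "nat set" | BRe "nat set" "nat set" "nat set" | BIm "nat set" "nat set" "nat set"

definition mdisj :: "nat \<Rightarrow> nat set \<Rightarrow> nat set \<Rightarrow> nat set \<Rightarrow> bool" where
  "mdisj n K I J \<longleftrightarrow> K \<subseteq> Nn n \<and> I \<subseteq> Nn n \<and> J \<subseteq> Nn n \<and>
      K \<inter> I = {} \<and> K \<inter> J = {} \<and> I \<inter> J = {}"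

definition Bidx :: "nat \<Rightarrow> (nat set \<times> nat set) set \<Rightarrow> bidx set" where
  "Bidx n R = {BD K | K. K \<subseteq> Nn n}
     \<union> {BRe K I J | K I J. mdisj n K I J \<and> (I, J) \<in> R}
     \<union> {BIm K I J | K I J. mdisj n K I J \<and> (I, J) \<in> R}"

fun bvec :: "nat \<Rightarrow> bidx \<Rightarrow> fop" where
  "bvec n (BD K) = smul (complex_of_real (1 / sqrt (2 ^ n))) (bK n K)"
| "bvec n (BRe K I J) = smul (complex_of_real (1 / sqrt (2 ^ (n + 1 - card (I \<union> J)))))
        (mmul n (bK n K) (cc n I J + cc n J I))"
| "bvec n (BIm K I J) = smul (- \<i> * complex_of_real (1 / sqrt (2 ^ (n + 1 - card (I \<union> J)))))
        (mmul n (bK n K) (cc n I J - cc n J I))"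

fun bdeg_ok :: "nat \<Rightarrow> bidx \<Rightarrow> bool" where
  "bdeg_ok k (BD K) \<longleftrightarrow> card K \<le> k"
| "bdeg_ok k (BRe K I J) \<longleftrightarrow> (\<exists>l\<le>k. card I + card J + 2 * card K = 2 * l)"
| "bdeg_ok k (BIm K I J) \<longleftrightarrow> (\<exists>l\<le>k. card I + card J + 2 * card K = 2 * l)"

definition orthonormal_fam :: "nat \<Rightarrow> bidx set \<Rightarrow> (bidx \<Rightarrow> fop) \<Rightarrow> bool" where
  "orthonormal_fam n S f \<longleftrightarrow>
     (\<forall>i\<in>S. \<forall>j\<in>S. hs_inner n (f i) (f j) = (if i = j then 1 else 0))"

end

theory Submission
  imports Defs
begin

lemma sum_app: "(\<Sum>i\<in>S. f i) x = (\<Sum>i\<in>S. f i x)"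
  by (induction S rule: infinite_finite_induct) auto

lemma smul_app[simp]: "smul c M X Y = c * M X Y" by (simp add: smul_def)
lemma adj_app[simp]: "adj M X Y = cnj (M Y X)" by (simp add: adj_def)
lemma mmul_app: "mmul n M N X Y = (\<Sum>Z\<in>Pow (Nn n). M X Z * N Z Y)" by (simp add: mmul_def)
lemma finite_Nn[simp]: "finite (Nn n)" by (simp add: Nn_def)
lemma card_Nn[simp]: "card (Nn n) = n" by (simp add: Nn_def)

lemma wsign_real[simp]: "cnj (wsign A B) = wsign A B" by (simp add: wsign_def)
lemma wsign_sq[simp]: "wsign A B * wsign A B = 1"
proof -
  have "((-1::complex)^k) * (-1)^k = 1" for k :: nat
    by (induction k) auto
  then show ?thesis by (simp add: wsign_def)
qed
lemma wsign_empty1[simp]: "wsign {} B = 1" by (simp add: wsign_def)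
lemma wsign_empty2[simp]: "wsign A {} = 1" by (simp add: wsign_def)

lemma wsign_Un2:
  assumes "finite A" "finite B" "finite C" "B \<inter> C = {}"
  shows "wsign A (B \<union> C) = wsign A B * wsign A C"
proof -
  let ?P = "\<lambda>B. {(a, b). a \<in> A \<and> b \<in> B \<and> b < a}"
  have e: "?P (B \<union> C) = ?P B \<union> ?P C" by auto
  have fB: "finite (?P B)" by (rule finite_subset[of _ "A \<times> B"]) (use assms in auto)
  have fC: "finite (?P C)" by (rule finite_subset[of _ "A \<times> C"]) (use assms in auto)
  have d: "?P B \<inter> ?P C = {}" using assms(4) by auto
  show ?thesis unfolding wsign_def e card_Un_disjoint[OF fB fC d] by (simp add: power_add)
qed

lemma wsign_Un1:
  assumes "finite A" "finite B" "finite C" "A \<inter> B = {}"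
  shows "wsign (A \<union> B) C = wsign A C * wsign B C"
proof -
  let ?P = "\<lambda>A. {(a, b). a \<in> A \<and> b \<in> C \<and> b < a}"
  have e: "?P (A \<union> B) = ?P A \<union> ?P B" by auto
  have fB: "finite (?P A)" by (rule finite_subset[of _ "A \<times> C"]) (use assms in auto)
  have fC: "finite (?P B)" by (rule finite_subset[of _ "B \<times> C"]) (use assms in auto)
  have d: "?P A \<inter> ?P B = {}" using assms(4) by auto
  show ?thesis unfolding wsign_def e card_Un_disjoint[OF fB fC d] by (simp add: power_add)
qed


lemma cc_formula: "cc n A B X Y = (if A \<subseteq> Nn n \<and> B \<subseteq> Nn n \<and> X \<subseteq> Nn n \<and> Y \<subseteq> Nn n \<and> A \<subseteq> X \<and> B \<subseteq> Y \<and> X - A = Y - B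
     then wsign A (X - A) * wsign B (X - A) else 0)" (is "_ = ?g")
proof -
  have im: "(if P1 then a else 0) * cnj (if P2 then b else 0) = (if P1 \<and> P2 then a * cnj b else (0::complex))"
    for P1 P2 a b by auto
  have t: "cstarA n A X Z * cnj (cstarA n B Y Z) = (if Z = X - A then ?g else 0)" for Z
  proof (cases "Z = X - A")
    case True
    have e: "((A \<subseteq> Nn n \<and> X - A \<subseteq> Nn n \<and> A \<inter> (X - A) = {} \<and> X = A \<union> (X - A)) \<and> (B \<subseteq> Nn n \<and> X - A \<subseteq> Nn n \<and> B \<inter> (X - A) = {} \<and> Y = B \<union> (X - A)))
      \<longleftrightarrow> (A \<subseteq> Nn n \<and> B \<subseteq> Nn n \<and> X \<subseteq> Nn n \<and> Y \<subseteq> Nn n \<and> A \<subseteq> X \<and> B \<subseteq> Y \<and> X - A = Y - B)"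
      by blast
    show ?thesis unfolding True cstarA_def im e by simp
  next
    case False
    have "\<not> (A \<inter> Z = {} \<and> X = A \<union> Z)" using False by blast
    then show ?thesis unfolding cstarA_def using False by (simp only: if_False if_not_P mult_zero_left) simp
  qed
  have "cc n A B X Y = (\<Sum>Z\<in>Pow (Nn n). cstarA n A X Z * cnj (cstarA n B Y Z))"
    by (simp add: cc_def mmul_app)
  also have "\<dots> = (\<Sum>Z\<in>Pow (Nn n). if Z = X - A then ?g else 0)" using t by simp
  also have "\<dots> = ?g" by (auto simp: sum.delta')
  finally show ?thesis .
qed

lemma pow_sum: "finite S \<Longrightarrow> (\<Sum>I\<in>Pow S. (-2::complex)^card I) = (-1)^card S"
proof -
  assume f: "finite S"
  have "(\<Prod>x\<in>S. (-2::complex) + 1) = (\<Sum>X\<in>Pow S. (\<Prod>x\<in>X. -2) * (\<Prod>x\<in>S-X. 1))"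
    by (rule prod_add[OF f])
  then show ?thesis by simp
qed

lemma sgn_prod: "finite K \<Longrightarrow> (\<Prod>x\<in>K. if x \<in> A then -1 else 1::complex) = (-1)^card (K \<inter> A)"
  by (simp add: prod.If_cases Int_def)

lemma char_sum:
  assumes "finite C"
  shows "(\<Sum>K\<in>Pow C. (-1::complex)^card (K \<inter> A) * (-1)^card (K \<inter> B)) = (if A \<inter> C = B \<inter> C then 2^card C else 0)"
proof -
  define f where "f x = (if x \<in> A then -1 else 1::complex) * (if x \<in> B then -1 else 1)" for x
  have "(\<Prod>x\<in>C. f x + 1) = (\<Sum>X\<in>Pow C. (\<Prod>x\<in>X. f x) * (\<Prod>x\<in>C-X. 1))"
    by (rule prod_add[OF assms])
  also have "\<dots> = (\<Sum>K\<in>Pow C. (-1::complex)^card (K \<inter> A) * (-1)^card (K \<inter> B))"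
  proof (rule sum.cong[OF refl])
    fix K assume "K \<in> Pow C"
    then have fK: "finite K" using assms finite_subset by auto
    show "(\<Prod>x\<in>K. f x) * (\<Prod>x\<in>C-K. 1) = (-1::complex)^card (K \<inter> A) * (-1)^card (K \<inter> B)"
      unfolding f_def using sgn_prod[OF fK, of A] sgn_prod[OF fK, of B] by (simp add: prod.distrib)
  qed
  finally have e: "(\<Sum>K\<in>Pow C. (-1::complex)^card (K \<inter> A) * (-1)^card (K \<inter> B)) = (\<Prod>x\<in>C. f x + 1)" ..
  show ?thesis
  proof (cases "A \<inter> C = B \<inter> C")
    case True
    then have "\<And>x. x \<in> C \<Longrightarrow> f x + 1 = 2" unfolding f_def by auto
    then show ?thesis using True e by simp
  next
    case False
    then obtain x where x: "x \<in> C" "(x \<in> A) \<noteq> (x \<in> B)" by auto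
    then have "f x + 1 = 0" unfolding f_def by auto
    with x have "x \<in> C" "f x + 1 = 0" by auto
    then have "(\<Prod>x\<in>C. f x + 1) = 0" using assms by (meson prod_zero)
    then show ?thesis using False e by simp
  qed
qed


lemma cc_real[simp]: "cnj (cc n A B X Y) = cc n A B X Y"
  by (simp add: cc_formula)

lemma cc_swap: "cc n B A Y X = cc n A B X Y"
  unfolding cc_formula by (auto simp: mult.commute)

lemma cc_supp:
  assumes "cc n A B X Y \<noteq> 0"
  shows "X - Y = A - B \<and> Y - X = B - A \<and> A \<subseteq> X \<and> B \<subseteq> Y \<and> X - A = Y - B \<and>
         X \<subseteq> Nn n \<and> Y \<subseteq> Nn n \<and> A \<subseteq> Nn n \<and> B \<subseteq> Nn n"
proof -
  have h: "A \<subseteq> Nn n \<and> B \<subseteq> Nn n \<and> X \<subseteq> Nn n \<and> Y \<subseteq> Nn n \<and> A \<subseteq> X \<and> B \<subseteq> Y \<and> X - A = Y - B"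
    using assms unfolding cc_formula by (auto split: if_splits)
  then have "X - Y = A - B" by blast
  moreover from h have "Y - X = B - A" by blast
  ultimately show ?thesis using h by blast
qed

lemma nA_formula: "nA n L X Y = (if L \<subseteq> Nn n \<and> X \<subseteq> Nn n \<and> L \<subseteq> X \<and> Y = X then 1 else 0)"
proof -
  have "(L \<subseteq> Nn n \<and> L \<subseteq> Nn n \<and> X \<subseteq> Nn n \<and> Y \<subseteq> Nn n \<and> L \<subseteq> X \<and> L \<subseteq> Y \<and> X - L = Y - L)
     \<longleftrightarrow> (L \<subseteq> Nn n \<and> X \<subseteq> Nn n \<and> L \<subseteq> X \<and> Y = X)" by blast
  then show ?thesis unfolding nA_def cc_formula by simp
qed

lemma bK_formula:
  assumes "K \<subseteq> Nn n"
  shows "bK n K X Y = (if X \<subseteq> Nn n \<and> Y = X then (-1)^card (K \<inter> X) else 0)"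
proof -
  have fK: "finite K" using finite_subset[OF assms finite_Nn] .
  have "bK n K X Y = (\<Sum>I\<in>Pow K. (-2)^card I * nA n I X Y)"
    unfolding bK_def by (simp add: sum_app)
  also have "\<dots> = (if X \<subseteq> Nn n \<and> Y = X then (\<Sum>I\<in>Pow K. if I \<subseteq> X then (-2)^card I else 0) else 0)"
  proof (cases "X \<subseteq> Nn n \<and> Y = X")
    case True
    have "\<And>I. I \<in> Pow K \<Longrightarrow> I \<subseteq> Nn n" using assms by auto
    then have "(\<Sum>I\<in>Pow K. (-2)^card I * nA n I X Y) = (\<Sum>I\<in>Pow K. if I \<subseteq> X then (-2)^card I else 0)"
      using True by (intro sum.cong) (auto simp: nA_formula)
    then show ?thesis using True by simp
  next
    case False
    then have z: "\<And>I. nA n I X Y = 0" by (auto simp: nA_formula)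
    show ?thesis unfolding if_not_P[OF False] using z by simp
  qed
  also have "(\<Sum>I\<in>Pow K. if I \<subseteq> X then (-2::complex)^card I else 0) = (\<Sum>I\<in>{I\<in>Pow K. I \<subseteq> X}. (-2)^card I)"
    using sum.inter_filter[of "Pow K" "\<lambda>I. (-2::complex)^card I" "\<lambda>I. I \<subseteq> X"] fK by simp
  also have "{I\<in>Pow K. I \<subseteq> X} = Pow (K \<inter> X)" by auto
  also have "(\<Sum>I\<in>Pow (K \<inter> X). (-2::complex)^card I) = (-1)^card (K \<inter> X)"
    by (rule pow_sum) (use fK in auto)
  finally show ?thesis .
qed

definition Tm :: "nat \<Rightarrow> nat set \<Rightarrow> nat set \<Rightarrow> nat set \<Rightarrow> fop" where
  "Tm n K I J = mmul n (bK n K) (cc n I J)"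

lemma Tm_formula:
  assumes "K \<subseteq> Nn n"
  shows "Tm n K I J X Y = (-1)^card (K \<inter> X) * cc n I J X Y"
proof -
  have "Tm n K I J X Y = (\<Sum>Z\<in>Pow (Nn n). bK n K X Z * cc n I J Z Y)"
    by (simp add: Tm_def mmul_app)
  also have "\<dots> = (\<Sum>Z\<in>Pow (Nn n). if Z = X then (if X \<subseteq> Nn n then (-1)^card (K \<inter> X) * cc n I J X Y else 0) else 0)"
    by (intro sum.cong) (auto simp: bK_formula[OF assms])
  also have "\<dots> = (if X \<subseteq> Nn n then (-1)^card (K \<inter> X) * cc n I J X Y else 0)"
    by (simp add: sum.delta')
  also have "\<dots> = (-1)^card (K \<inter> X) * cc n I J X Y"
    by (auto simp: cc_formula)
  finally show ?thesis .
qed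

lemma cc_empty: "cc n {} {} X Y = (if X \<subseteq> Nn n \<and> Y = X then 1 else 0)"
  unfolding cc_formula by auto

lemma bK_Tm: "K \<subseteq> Nn n \<Longrightarrow> bK n K X Y = Tm n K {} {} X Y"
  by (simp add: bK_formula Tm_formula cc_empty)

definition cR :: "nat \<Rightarrow> nat set \<Rightarrow> nat set \<Rightarrow> complex" where
  "cR n I J = complex_of_real (1 / sqrt (2 ^ (n + 1 - card (I \<union> J))))"

lemma bvec_BD: "K \<subseteq> Nn n \<Longrightarrow> bvec n (BD K) X Y = complex_of_real (1 / sqrt (2 ^ n)) * Tm n K {} {} X Y"
  by (simp add: bK_Tm)

lemma bvec_BRe: "bvec n (BRe K I J) X Y = cR n I J * (Tm n K I J X Y + Tm n K J I X Y)"
  by (simp add: cR_def Tm_def mmul_app sum.distrib distrib_left)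

lemma bvec_BIm: "bvec n (BIm K I J) X Y = - \<i> * cR n I J * (Tm n K I J X Y - Tm n K J I X Y)"
  by (simp add: cR_def Tm_def mmul_app sum_subtractf right_diff_distrib)


lemma sq4: "(a * b) * ((a * b) :: complex) = (a * a) * (b * b)" by (simp add: algebra_simps)

lemma sum_sup_reindex:
  assumes "L \<subseteq> C"
  shows "sum g {X \<in> Pow C. L \<subseteq> X} = (\<Sum>W\<in>Pow (C - L). g (L \<union> W))"
proof -
  have "bij_betw (\<lambda>W. L \<union> W) (Pow (C - L)) {X \<in> Pow C. L \<subseteq> X}"
    by (rule bij_betw_byWitness[where f'="\<lambda>X. X - L"]) (use assms in auto)
  then show ?thesis by (simp add: sum.reindex_bij_betw)
qed

lemma cc_dis:
  assumes "I \<subseteq> Nn n" "J \<subseteq> Nn n" "I \<inter> J = {}" "X \<subseteq> Nn n"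
  shows "cc n I J X Y = (if I \<subseteq> X \<and> X \<inter> J = {} \<and> Y = J \<union> (X - I) then wsign I (X - I) * wsign J (X - I) else 0)"
proof -
  have "(I \<subseteq> Nn n \<and> J \<subseteq> Nn n \<and> X \<subseteq> Nn n \<and> Y \<subseteq> Nn n \<and> I \<subseteq> X \<and> J \<subseteq> Y \<and> X - I = Y - J)
      \<longleftrightarrow> (I \<subseteq> X \<and> X \<inter> J = {} \<and> Y = J \<union> (X - I))" using assms by blast
  then show ?thesis unfolding cc_formula by simp
qed

lemma cnj_m1pow[simp]: "cnj ((-1::complex)^k) = (-1)^k" by simp

lemma Tm_real[simp]: "K \<subseteq> Nn n \<Longrightarrow> cnj (Tm n K I J X Y) = Tm n K I J X Y"
  by (simp add: Tm_formula)

lemma Tinner: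
  assumes md: "mdisj n K I J"
  shows "hs_inner n (Tm n K I J) M =
     (\<Sum>Z\<in>Pow (Nn n - (I \<union> J)). (-1)^card (K \<inter> Z) * (wsign I Z * wsign J Z) * M (I \<union> Z) (J \<union> Z))"
proof -
  have K: "K \<subseteq> Nn n" and I: "I \<subseteq> Nn n" and J: "J \<subseteq> Nn n" and IJ: "I \<inter> J = {}"
    and KI: "K \<inter> I = {}" and KJ: "K \<inter> J = {}" using md by (auto simp: mdisj_def)
  define g where "g X = (-1)^card (K \<inter> X) * (wsign I (X - I) * wsign J (X - I)) * M X (J \<union> (X - I))" for X
  have inner: "(\<Sum>Y\<in>Pow (Nn n). cnj (Tm n K I J X Y) * M X Y) = (if I \<subseteq> X \<and> X \<inter> J = {} then g X else 0)"
    if X: "X \<in> Pow (Nn n)" for X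
  proof -
    have "(\<Sum>Y\<in>Pow (Nn n). cnj (Tm n K I J X Y) * M X Y)
        = (\<Sum>Y\<in>Pow (Nn n). if Y = J \<union> (X - I) then (if I \<subseteq> X \<and> X \<inter> J = {} then g X else 0) else 0)"
      using X by (intro sum.cong) (auto simp: Tm_formula[OF K] cc_dis[OF I J IJ] g_def)
    also have "\<dots> = (if I \<subseteq> X \<and> X \<inter> J = {} then g X else 0)"
      using X J by (simp add: sum.delta' Diff_subset[THEN subset_trans])
    finally show ?thesis .
  qed
  have "hs_inner n (Tm n K I J) M = (\<Sum>X\<in>Pow (Nn n). if I \<subseteq> X \<and> X \<inter> J = {} then g X else 0)"
    unfolding hs_inner_def using inner by (intro sum.cong) auto
  also have "\<dots> = sum g {X \<in> Pow (Nn n). I \<subseteq> X \<and> X \<inter> J = {}}"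
    by (rule sum.inter_filter[symmetric]) simp
  also have "{X \<in> Pow (Nn n). I \<subseteq> X \<and> X \<inter> J = {}} = {X \<in> Pow (Nn n - J). I \<subseteq> X}" by auto
  also have "sum g \<dots> = (\<Sum>W\<in>Pow (Nn n - J - I). g (I \<union> W))"
    by (rule sum_sup_reindex) (use I IJ in auto)
  also have "\<dots> = (\<Sum>Z\<in>Pow (Nn n - (I \<union> J)). (-1)^card (K \<inter> Z) * (wsign I Z * wsign J Z) * M (I \<union> Z) (J \<union> Z))"
  proof (rule sum.cong)
    show "Pow (Nn n - J - I) = Pow (Nn n - (I \<union> J))" by auto
  next
    fix Z assume "Z \<in> Pow (Nn n - (I \<union> J))"
    then have Z: "Z \<inter> I = {}" "Z \<inter> J = {}" by auto
    have e1: "(I \<union> Z) - I = Z" using Z by auto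
    have e2: "K \<inter> (I \<union> Z) = K \<inter> Z" using KI by auto
    show "g (I \<union> Z) = (-1)^card (K \<inter> Z) * (wsign I Z * wsign J Z) * M (I \<union> Z) (J \<union> Z)"
      unfolding g_def e1 e2 ..
  qed
  finally show ?thesis .
qed

lemma cc_at:
  assumes "I \<subseteq> Nn n" "J \<subseteq> Nn n" "I \<inter> J = {}" "Z \<subseteq> Nn n - (I \<union> J)"
  shows "cc n I J (I \<union> Z) (J \<union> Z) = wsign I Z * wsign J Z"
proof -
  have e1: "(I \<union> Z) - I = Z" using assms by auto
  have "I \<union> Z \<subseteq> Nn n" "(I \<union> Z) \<inter> J = {}" using assms by auto
  then show ?thesis using assms by (simp add: cc_dis e1)
qed

lemma cc_at_other:
  assumes "I \<inter> J = {}" "Z \<inter> (I \<union> J) = {}" "I' \<inter> J' = {}" "(I', J') \<noteq> (I, J)"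
  shows "cc n I' J' (I \<union> Z) (J \<union> Z) = 0"
proof (rule ccontr)
  assume "cc n I' J' (I \<union> Z) (J \<union> Z) \<noteq> 0"
  from cc_supp[OF this] have "(I \<union> Z) - (J \<union> Z) = I' - J'" "(J \<union> Z) - (I \<union> Z) = J' - I'" by auto
  moreover have "(I \<union> Z) - (J \<union> Z) = I" "(J \<union> Z) - (I \<union> Z) = J" using assms by auto
  ultimately have "I' = I" "J' = J" using assms(3) by auto
  then show False using assms(4) by simp
qed

lemma TT:
  assumes md: "mdisj n K I J" and md': "mdisj n K' I' J'"
  shows "hs_inner n (Tm n K I J) (Tm n K' I' J') = (if I = I' \<and> J = J' \<and> K = K' then 2^card (Nn n - (I \<union> J)) else 0)"
proof -
  have K: "K \<subseteq> Nn n" and I: "I \<subseteq> Nn n" and J: "J \<subseteq> Nn n" and IJ: "I \<inter> J = {}"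
    and KI: "K \<inter> I = {}" and KJ: "K \<inter> J = {}" using md by (auto simp: mdisj_def)
  have K': "K' \<subseteq> Nn n" and I': "I' \<subseteq> Nn n" and J': "J' \<subseteq> Nn n" and IJ': "I' \<inter> J' = {}"
    and KI': "K' \<inter> I' = {}" and KJ': "K' \<inter> J' = {}" using md' by (auto simp: mdisj_def)
  let ?C = "Nn n - (I \<union> J)"
  show ?thesis
  proof (cases "(I', J') = (I, J)")
    case False
    have "hs_inner n (Tm n K I J) (Tm n K' I' J') = (\<Sum>Z\<in>Pow ?C. 0)"
      unfolding Tinner[OF md]
    proof (rule sum.cong[OF refl])
      fix Z assume "Z \<in> Pow ?C"
      then have "Z \<inter> (I \<union> J) = {}" by auto
      then have "cc n I' J' (I \<union> Z) (J \<union> Z) = 0" using cc_at_other[OF IJ _ IJ' False] by blast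
      then show "(-1)^card (K \<inter> Z) * (wsign I Z * wsign J Z) * Tm n K' I' J' (I \<union> Z) (J \<union> Z) = 0"
        by (simp add: Tm_formula[OF K'])
    qed
    then show ?thesis using False by auto
  next
    case True
    then have eI: "I' = I" and eJ: "J' = J" by auto
    have "hs_inner n (Tm n K I J) (Tm n K' I' J') = (\<Sum>Z\<in>Pow ?C. (-1)^card (Z \<inter> K) * (-1)^card (Z \<inter> K'))"
      unfolding Tinner[OF md]
    proof (rule sum.cong[OF refl])
      fix Z assume "Z \<in> Pow ?C"
      then have Z: "Z \<subseteq> ?C" by auto
      have e2: "K' \<inter> (I \<union> Z) = K' \<inter> Z" using KI' eI by auto
      have "(-1)^card (K \<inter> Z) * (wsign I Z * wsign J Z) * Tm n K' I' J' (I \<union> Z) (J \<union> Z)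
          = (-1)^card (K \<inter> Z) * (-1)^card (K' \<inter> Z) * ((wsign I Z * wsign J Z) * (wsign I Z * wsign J Z))"
        unfolding Tm_formula[OF K'] eI eJ e2 cc_at[OF I J IJ Z] by (simp add: algebra_simps)
      also have "\<dots> = (-1)^card (Z \<inter> K) * (-1)^card (Z \<inter> K')"
        unfolding sq4 wsign_sq by (simp add: Int_commute)
      finally show "(-1)^card (K \<inter> Z) * (wsign I Z * wsign J Z) * Tm n K' I' J' (I \<union> Z) (J \<union> Z)
          = (-1)^card (Z \<inter> K) * (-1)^card (Z \<inter> K')" .
    qed
    also have "\<dots> = (if K \<inter> ?C = K' \<inter> ?C then 2^card ?C else 0)"
      by (rule char_sum) simp
    also have "K \<inter> ?C = K" using K KI KJ by auto
    also have "K' \<inter> ?C = K'" using K' KI' KJ' eI eJ by auto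
    finally show ?thesis using eI eJ by auto
  qed
qed


lemma Tm_supp: "K \<subseteq> Nn n \<Longrightarrow> Tm n K I J X Y \<noteq> 0 \<Longrightarrow> X \<subseteq> Nn n \<and> Y \<subseteq> Nn n"
  using cc_supp by (auto simp: Tm_formula)

lemma Tm_swap:
  assumes md: "mdisj n K I J"
  shows "Tm n K I J Y X = Tm n K J I X Y"
proof -
  have K: "K \<subseteq> Nn n" and KI: "K \<inter> I = {}" and KJ: "K \<inter> J = {}" using md by (auto simp: mdisj_def)
  show ?thesis
  proof (cases "cc n J I X Y = 0")
    case True
    then show ?thesis by (simp add: Tm_formula[OF K] cc_swap)
  next
    case False
    from cc_supp[OF this] have "X - J = Y - I" "J \<subseteq> X" "I \<subseteq> Y" by auto
    then have "K \<inter> X = K \<inter> Y" using KI KJ by blast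
    then show ?thesis by (simp add: Tm_formula[OF K] cc_swap)
  qed
qed

lemma mdisj_swap: "mdisj n K I J \<Longrightarrow> mdisj n K J I" by (auto simp: mdisj_def)
lemma mdisj_BD: "K \<subseteq> Nn n \<Longrightarrow> mdisj n K {} {}" by (auto simp: mdisj_def)

lemma Bidx_E:
  assumes "i \<in> Bidx n R"
  obtains K where "i = BD K" "K \<subseteq> Nn n"
    | K I J where "i = BRe K I J" "mdisj n K I J" "(I, J) \<in> R"
    | K I J where "i = BIm K I J" "mdisj n K I J" "(I, J) \<in> R"
  using assms by (auto simp: Bidx_def)

lemma cnj_cR[simp]: "cnj (cR n I J) = cR n I J" by (simp add: cR_def)

lemma adj_bvec:
  assumes "i \<in> Bidx n R"
  shows "adj (bvec n i) = bvec n i"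
proof (rule ext, rule ext)
  fix X Y
  from assms show "adj (bvec n i) X Y = bvec n i X Y"
  proof (cases rule: Bidx_E)
    case (1 K)
    show ?thesis unfolding 1(1) adj_app bvec_BD[OF 1(2)] Tm_swap[OF mdisj_BD[OF 1(2)], where X=X and Y=Y]
      by (simp add: Tm_real[OF 1(2)])
  next
    case (2 K I J)
    have K: "K \<subseteq> Nn n" using 2 by (auto simp: mdisj_def)
    show ?thesis unfolding 2(1) adj_app bvec_BRe Tm_swap[OF 2(2), where X=X and Y=Y] Tm_swap[OF mdisj_swap[OF 2(2)], where X=X and Y=Y]
      by (simp add: Tm_real[OF K] add.commute)
  next
    case (3 K I J)
    have K: "K \<subseteq> Nn n" using 3 by (auto simp: mdisj_def)
    show ?thesis unfolding 3(1) adj_app bvec_BIm Tm_swap[OF 3(2), where X=X and Y=Y] Tm_swap[OF mdisj_swap[OF 3(2)], where X=X and Y=Y]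
      by (simp add: Tm_real[OF K] algebra_simps)
  qed
qed

fun bP :: "bidx \<Rightarrow> nat set \<times> nat set \<times> nat set" where
  "bP (BD K) = (K, {}, {})" | "bP (BRe K I J) = (K, I, J)" | "bP (BIm K I J) = (K, I, J)"
fun bQ :: "bidx \<Rightarrow> nat set \<times> nat set \<times> nat set" where
  "bQ (BD K) = (K, {}, {})" | "bQ (BRe K I J) = (K, J, I)" | "bQ (BIm K I J) = (K, J, I)"
definition cD :: "nat \<Rightarrow> complex" where "cD n = complex_of_real (1 / sqrt (2 ^ n))"
lemma cnj_cD[simp]: "cnj (cD n) = cD n" by (simp add: cD_def)

fun ca :: "nat \<Rightarrow> bidx \<Rightarrow> complex" where
  "ca n (BD K) = cD n" | "ca n (BRe K I J) = cR n I J"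
| "ca n (BIm K I J) = - \<i> * cR n I J"
fun cb :: "nat \<Rightarrow> bidx \<Rightarrow> complex" where
  "cb n (BD K) = 0" | "cb n (BRe K I J) = cR n I J" | "cb n (BIm K I J) = \<i> * cR n I J"

definition TmT :: "nat \<Rightarrow> nat set \<times> nat set \<times> nat set \<Rightarrow> fop" where
  "TmT n p = (case p of (K, I, J) \<Rightarrow> Tm n K I J)"

definition md3 :: "nat \<Rightarrow> nat set \<times> nat set \<times> nat set \<Rightarrow> bool" where
  "md3 n p = (case p of (K, I, J) \<Rightarrow> mdisj n K I J)"

lemma bvec_dec:
  assumes "i \<in> Bidx n R"
  shows "bvec n i X Y = ca n i * TmT n (bP i) X Y + cb n i * TmT n (bQ i) X Y"
    and "md3 n (bP i)" and "md3 n (bQ i)"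
proof -
  from assms have "bvec n i X Y = ca n i * TmT n (bP i) X Y + cb n i * TmT n (bQ i) X Y \<and> md3 n (bP i) \<and> md3 n (bQ i)"
  proof (cases rule: Bidx_E)
    case (1 K)
    show ?thesis unfolding 1(1) bvec_BD[OF 1(2)] using 1(2) by (simp add: TmT_def md3_def mdisj_BD cD_def)
  next
    case (2 K I J)
    show ?thesis unfolding 2(1) bvec_BRe using 2(2) by (simp add: TmT_def md3_def mdisj_swap distrib_left)
  next
    case (3 K I J)
    have "- \<i> * cR n I J * (Tm n K I J X Y - Tm n K J I X Y) = - \<i> * cR n I J * Tm n K I J X Y + \<i> * cR n I J * Tm n K J I X Y"
      by (simp add: algebra_simps)
    then show ?thesis unfolding 3(1) bvec_BIm using 3(2) by (simp add: TmT_def md3_def mdisj_swap)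
  qed
  then show "bvec n i X Y = ca n i * TmT n (bP i) X Y + cb n i * TmT n (bQ i) X Y"
    and "md3 n (bP i)" and "md3 n (bQ i)" by auto
qed

lemma hs_lin1:
  assumes "\<And>X Y. M X Y = a * P X Y + b * Q X Y"
  shows "hs_inner n M N = cnj a * hs_inner n P N + cnj b * hs_inner n Q N"
  unfolding hs_inner_def assms by (simp add: sum_distrib_left sum.distrib algebra_simps)

lemma hs_lin2:
  assumes "\<And>X Y. N X Y = a * P X Y + b * Q X Y"
  shows "hs_inner n M N = a * hs_inner n M P + b * hs_inner n M Q"
  unfolding hs_inner_def assms by (simp add: sum_distrib_left sum.distrib algebra_simps)

lemma TTT:
  assumes "md3 n p" "md3 n q"
  shows "hs_inner n (TmT n p) (TmT n q) = (if p = q then 2 ^ card (Nn n - (fst (snd p) \<union> snd (snd p))) else 0)"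
  using assms TT by (cases p; cases q) (auto simp: TmT_def md3_def)

lemma bvec_inner:
  assumes "i \<in> Bidx n R" "j \<in> Bidx n R"
  shows "hs_inner n (bvec n i) (bvec n j) =
     cnj (ca n i) * (ca n j * hs_inner n (TmT n (bP i)) (TmT n (bP j)) + cb n j * hs_inner n (TmT n (bP i)) (TmT n (bQ j)))
   + cnj (cb n i) * (ca n j * hs_inner n (TmT n (bQ i)) (TmT n (bP j)) + cb n j * hs_inner n (TmT n (bQ i)) (TmT n (bQ j)))"
  by (subst hs_lin1[OF bvec_dec(1)[OF assms(1)]], subst hs_lin2[OF bvec_dec(1)[OF assms(2)]],
      subst hs_lin2[OF bvec_dec(1)[OF assms(2)]]) (rule refl)

lemma of_real_sq2: "complex_of_real (x * x * 2 ^ k) = complex_of_real x * complex_of_real x * 2 ^ k"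
  by (simp only: of_real_mult of_real_power of_real_numeral)

lemma cR_sq:
  assumes "I \<union> J \<subseteq> Nn n"
  shows "cR n I J * cR n I J * 2 ^ card (Nn n - (I \<union> J)) = 1 / 2"
proof -
  have c: "card (I \<union> J) \<le> n" using card_mono[OF finite_Nn assms] by simp
  have cd: "card (Nn n - (I \<union> J)) = n - card (I \<union> J)"
    using card_Diff_subset[OF finite_subset[OF assms finite_Nn] assms] by simp
  have e: "n + 1 - card (I \<union> J) = Suc (n - card (I \<union> J))" using c by simp
  have "sqrt (2 ^ (n + 1 - card (I \<union> J))) * sqrt (2 ^ (n + 1 - card (I \<union> J))) = 2 ^ (n + 1 - card (I \<union> J))"
    by simp
  then have "(1 / sqrt (2 ^ (n + 1 - card (I \<union> J)))) * (1 / sqrt (2 ^ (n + 1 - card (I \<union> J)))) * 2 ^ (n - card (I \<union> J)) = (1/2::real)"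
    unfolding e by (simp add: field_simps)
  then have "complex_of_real ((1 / sqrt (2 ^ (n + 1 - card (I \<union> J)))) * (1 / sqrt (2 ^ (n + 1 - card (I \<union> J)))) * 2 ^ (n - card (I \<union> J))) = 1/2"
    by simp
  then show ?thesis unfolding cR_def cd of_real_sq2 .
qed

lemma cD_sq: "complex_of_real (1 / sqrt (2 ^ n)) * complex_of_real (1 / sqrt (2 ^ n)) * 2 ^ n = 1"
proof -
  have "(1 / sqrt (2 ^ n)) * (1 / sqrt (2 ^ n)) * 2 ^ n = (1::real)" by simp
  then have "complex_of_real ((1 / sqrt (2 ^ n)) * (1 / sqrt (2 ^ n)) * 2 ^ n) = 1" by simp
  then show ?thesis unfolding of_real_sq2 .
qed

lemma cD_sq': "cD n * (cD n * 2 ^ n) = 1" using cD_sq by (simp add: cD_def mult.assoc)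


lemma R_irr: "strict_linear_order_on A R \<Longrightarrow> (I, J) \<in> R \<Longrightarrow> I \<noteq> J"
  by (auto simp: strict_linear_order_on_def irrefl_def)

lemma R_asym: "strict_linear_order_on A R \<Longrightarrow> (I, J) \<in> R \<Longrightarrow> (J, I) \<notin> R"
  by (auto simp: strict_linear_order_on_def irrefl_def dest: transD)

lemma R_tot: "strict_linear_order_on A R \<Longrightarrow> I \<in> A \<Longrightarrow> J \<in> A \<Longrightarrow> I \<noteq> J \<Longrightarrow> (I, J) \<in> R \<or> (J, I) \<in> R"
  by (auto simp: strict_linear_order_on_def total_on_def)

lemma md_sub: "mdisj n K I J \<Longrightarrow> I \<union> J \<subseteq> Nn n" by (auto simp: mdisj_def)

lemma ortho:
  assumes R: "strict_linear_order_on (Pow (Nn n)) R" and i: "i \<in> Bidx n R" and j: "j \<in> Bidx n R"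
  shows "hs_inner n (bvec n i) (bvec n j) = (if i = j then 1 else 0)"
proof -
  note T = TTT[OF bvec_dec(2)[OF i] bvec_dec(2)[OF j]] TTT[OF bvec_dec(2)[OF i] bvec_dec(3)[OF j]]
    TTT[OF bvec_dec(3)[OF i] bvec_dec(2)[OF j]] TTT[OF bvec_dec(3)[OF i] bvec_dec(3)[OF j]]
  have e: "hs_inner n (bvec n i) (bvec n j) =
     cnj (ca n i) * (ca n j * hs_inner n (TmT n (bP i)) (TmT n (bP j)) + cb n j * hs_inner n (TmT n (bP i)) (TmT n (bQ j)))
   + cnj (cb n i) * (ca n j * hs_inner n (TmT n (bQ i)) (TmT n (bP j)) + cb n j * hs_inner n (TmT n (bQ i)) (TmT n (bQ j)))"
    by (rule bvec_inner[OF i j])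
  define h where "h = hs_inner n (bvec n i) (bvec n j)"
  note e = e[unfolded T, folded h_def]
  have "h = (if i = j then 1 else 0)"
  using i proof (cases rule: Bidx_E)
    case (1 K)
    note i1 = 1
    from j show ?thesis
    proof (cases rule: Bidx_E)
      case (1 K')
      show ?thesis
      proof (cases "K = K'")
        case True
        show ?thesis using e[unfolded i1(1) 1(1)] True cD_sq' unfolding i1(1) 1(1) by simp
      next
        case False
        show ?thesis using e[unfolded i1(1) 1(1)] False unfolding i1(1) 1(1) by simp
      qed
    next
      case (2 K' I' J')
      have "I' \<noteq> J'" using R_irr[OF R 2(3)] .
      then have c: "((K, {}, {}) = (K', I', J')) = False" "((K, {}, {}) = (K', J', I')) = False" by auto
      show ?thesis using e[unfolded i1(1) 2(1) bP.simps bQ.simps c] unfolding i1(1) 2(1) by simp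
    next
      case (3 K' I' J')
      have "I' \<noteq> J'" using R_irr[OF R 3(3)] .
      then have c: "((K, {}, {}) = (K', I', J')) = False" "((K, {}, {}) = (K', J', I')) = False" by auto
      show ?thesis using e[unfolded i1(1) 3(1) bP.simps bQ.simps c] unfolding i1(1) 3(1) by simp
    qed
  next
    case (2 K I J)
    note i2 = 2
    have ij: "I \<noteq> J" using R_irr[OF R 2(3)] .
    have sq: "cR n I J * cR n I J * 2 ^ card (Nn n - (I \<union> J)) = 1 / 2" using cR_sq[OF md_sub[OF 2(2)]] .
    then have sq': "cR n I J * (cR n I J * 2 ^ card (Nn n - (I \<union> J))) = 1 / 2" by (simp add: mult.assoc)
    from j show ?thesis
    proof (cases rule: Bidx_E)
      case (1 K')
      have c: "((K, I, J) = (K', {}, {})) = False" "((K, J, I) = (K', {}, {})) = False" using ij by auto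
      show ?thesis using e[unfolded i2(1) 1(1) bP.simps bQ.simps c] unfolding i2(1) 1(1) by simp
    next
      case (2 K' I' J')
      have as: "\<not> (I = J' \<and> J = I')" using R_asym[OF R i2(3)] 2(3) by auto
      show ?thesis
      proof (cases "K = K' \<and> I = I' \<and> J = J'")
        case True
        then have t: "K' = K" "I' = I" "J' = J" by auto
        have c: "((K, I, J) = (K, J, I)) = False" "((K, J, I) = (K, I, J)) = False" using ij by auto
        have "h = 1" using e[unfolded i2(1) 2(1) t bP.simps bQ.simps c] sq' by (simp add: Un_commute)
        then show ?thesis unfolding i2(1) 2(1) t by simp
      next
        case False
        have c: "((K, I, J) = (K', I', J')) = False" "((K, J, I) = (K', J', I')) = False"
          "((K, I, J) = (K', J', I')) = False" "((K, J, I) = (K', I', J')) = False"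
          using False as by auto
        have "h = 0" using e[unfolded i2(1) 2(1) bP.simps bQ.simps c] by simp
        moreover have "(BRe K I J = BRe K' I' J') = False" using False by simp
        ultimately show ?thesis unfolding i2(1) 2(1) by simp
      qed
    next
      case (3 K' I' J')
      have as: "\<not> (I = J' \<and> J = I')" using R_asym[OF R i2(3)] 3(3) by auto
      show ?thesis
      proof (cases "K = K' \<and> I = I' \<and> J = J'")
        case True
        then have t: "K' = K" "I' = I" "J' = J" by auto
        have c: "((K, I, J) = (K, J, I)) = False" "((K, J, I) = (K, I, J)) = False" using ij by auto
        have "h = 0" using e[unfolded i2(1) 3(1) t bP.simps bQ.simps c] by (simp add: Un_commute algebra_simps)
        then show ?thesis unfolding i2(1) 3(1) t by simp
      next
        case False
        have c: "((K, I, J) = (K', I', J')) = False" "((K, J, I) = (K', J', I')) = False"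
          "((K, I, J) = (K', J', I')) = False" "((K, J, I) = (K', I', J')) = False"
          using False as by auto
        have "h = 0" using e[unfolded i2(1) 3(1) bP.simps bQ.simps c] by simp
        moreover have "(BRe K I J = BIm K' I' J') = False" using False by simp
        ultimately show ?thesis unfolding i2(1) 3(1) by simp
      qed
    qed
  next
    case (3 K I J)
    note i3 = 3
    have ij: "I \<noteq> J" using R_irr[OF R 3(3)] .
    have sq: "cR n I J * cR n I J * 2 ^ card (Nn n - (I \<union> J)) = 1 / 2" using cR_sq[OF md_sub[OF 3(2)]] .
    then have sq': "cR n I J * (cR n I J * 2 ^ card (Nn n - (I \<union> J))) = 1 / 2" by (simp add: mult.assoc)
    from j show ?thesis
    proof (cases rule: Bidx_E)
      case (1 K')
      have c: "((K, I, J) = (K', {}, {})) = False" "((K, J, I) = (K', {}, {})) = False" using ij by auto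
      show ?thesis using e[unfolded i3(1) 1(1) bP.simps bQ.simps c] unfolding i3(1) 1(1) by simp
    next
      case (2 K' I' J')
      have as: "\<not> (I = J' \<and> J = I')" using R_asym[OF R i3(3)] 2(3) by auto
      show ?thesis
      proof (cases "K = K' \<and> I = I' \<and> J = J'")
        case True
        then have t: "K' = K" "I' = I" "J' = J" by auto
        have c: "((K, I, J) = (K, J, I)) = False" "((K, J, I) = (K, I, J)) = False" using ij by auto
        have "h = 0" using e[unfolded i3(1) 2(1) t bP.simps bQ.simps c] by (simp add: Un_commute algebra_simps)
        then show ?thesis unfolding i3(1) 2(1) t by simp
      next
        case False
        have c: "((K, I, J) = (K', I', J')) = False" "((K, J, I) = (K', J', I')) = False"
          "((K, I, J) = (K', J', I')) = False" "((K, J, I) = (K', I', J')) = False"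
          using False as by auto
        have "h = 0" using e[unfolded i3(1) 2(1) bP.simps bQ.simps c] by simp
        moreover have "(BIm K I J = BRe K' I' J') = False" using False by simp
        ultimately show ?thesis unfolding i3(1) 2(1) by simp
      qed
    next
      case (3 K' I' J')
      have as: "\<not> (I = J' \<and> J = I')" using R_asym[OF R i3(3)] 3(3) by auto
      show ?thesis
      proof (cases "K = K' \<and> I = I' \<and> J = J'")
        case True
        then have t: "K' = K" "I' = I" "J' = J" by auto
        have c: "((K, I, J) = (K, J, I)) = False" "((K, J, I) = (K, I, J)) = False" using ij by auto
        have "h = 1" using e[unfolded i3(1) 3(1) t bP.simps bQ.simps c] sq' by (simp add: Un_commute)
        then show ?thesis unfolding i3(1) 3(1) t by simp
      next
        case False
        have c: "((K, I, J) = (K', I', J')) = False" "((K, J, I) = (K', J', I')) = False"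
          "((K, I, J) = (K', J', I')) = False" "((K, J, I) = (K', I', J')) = False"
          using False as by auto
        have "h = 0" using e[unfolded i3(1) 3(1) bP.simps bQ.simps c] by simp
        moreover have "(BIm K I J = BIm K' I' J') = False" using False by simp
        ultimately show ?thesis unfolding i3(1) 3(1) by simp
      qed
    qed
  qed
  then show ?thesis unfolding h_def .
qed


lemma fsum_app: "(\<Sum>v\<in>S. f v) X Y = (\<Sum>v\<in>S. f v X Y)"
  by (simp add: sum_app)

lemma if0_mult: "(if P then a else 0) * b = (if P then a * b else (0::complex))" by simp

lemma sum_restrict:
  assumes "finite S" "S1 \<subseteq> S"
  shows "(\<Sum>v\<in>S. if v \<in> S1 then f v else 0) = sum f S1"
proof -
  have e: "S \<inter> S1 = S1" using assms by auto
  show ?thesis using sum.inter_restrict[of S f S1] assms(1) unfolding e by simp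
qed

lemma cspan_I: "finite S \<Longrightarrow> S \<subseteq> G \<Longrightarrow> M = (\<Sum>v\<in>S. smul (c v) v) \<Longrightarrow> M \<in> cspan G"
  unfolding cspan_def by blast

lemma cspan_E:
  assumes "M \<in> cspan G"
  obtains S c where "finite S" "S \<subseteq> G" "M = (\<Sum>v\<in>S. smul (c v) v)"
  using assms unfolding cspan_def by blast

lemma cspan_zero: "0 \<in> cspan G"
  by (rule cspan_I[of "{}"]) auto

lemma cspan_gen: "v \<in> G \<Longrightarrow> v \<in> cspan G"
  by (rule cspan_I[of "{v}" _ _ "\<lambda>_. 1"]) (auto simp: smul_def)

lemma cspan_smul: "M \<in> cspan G \<Longrightarrow> smul a M \<in> cspan G"
proof -
  assume "M \<in> cspan G"
  then obtain S c where S: "finite S" "S \<subseteq> G" "M = (\<Sum>v\<in>S. smul (c v) v)" by (rule cspan_E)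
  show ?thesis
  proof (rule cspan_I[OF S(1,2), where c="\<lambda>v. a * c v"], intro ext)
    fix X Y show "smul a M X Y = (\<Sum>v\<in>S. smul (a * c v) v) X Y"
      unfolding S(3) fsum_app smul_app by (simp add: sum_distrib_left mult.assoc)
  qed
qed

lemma cspan_add: "M \<in> cspan G \<Longrightarrow> N \<in> cspan G \<Longrightarrow> M + N \<in> cspan G"
proof -
  assume a: "M \<in> cspan G" "N \<in> cspan G"
  obtain S1 c1 where S1: "finite S1" "S1 \<subseteq> G" "M = (\<Sum>v\<in>S1. smul (c1 v) v)" using a(1) by (rule cspan_E)
  obtain S2 c2 where S2: "finite S2" "S2 \<subseteq> G" "N = (\<Sum>v\<in>S2. smul (c2 v) v)" using a(2) by (rule cspan_E)
  define c where "c v = (if v \<in> S1 then c1 v else 0) + (if v \<in> S2 then c2 v else 0)" for v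
  have f: "finite (S1 \<union> S2)" using S1 S2 by auto
  show ?thesis
  proof (rule cspan_I[OF f _, where c=c], use S1 S2 in blast, intro ext)
    fix X Y
    have "(\<Sum>v\<in>S1 \<union> S2. smul (c v) v) X Y
       = (\<Sum>v\<in>S1 \<union> S2. if v \<in> S1 then c1 v * v X Y else 0) + (\<Sum>v\<in>S1 \<union> S2. if v \<in> S2 then c2 v * v X Y else 0)"
      unfolding fsum_app smul_app c_def distrib_right if0_mult by (simp add: sum.distrib)
    also have "\<dots> = (\<Sum>v\<in>S1. c1 v * v X Y) + (\<Sum>v\<in>S2. c2 v * v X Y)"
      using f by (simp add: sum_restrict)
    also have "\<dots> = (M + N) X Y" unfolding S1(3) S2(3) by (simp add: fsum_app)
    finally show "(M + N) X Y = (\<Sum>v\<in>S1 \<union> S2. smul (c v) v) X Y" by simp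
  qed
qed

lemma cspan_sum: "finite T \<Longrightarrow> (\<And>t. t \<in> T \<Longrightarrow> f t \<in> cspan G) \<Longrightarrow> (\<Sum>t\<in>T. f t) \<in> cspan G"
  by (induction T rule: finite_induct) (auto intro: cspan_add cspan_zero)

lemma cspan_eqI: "(\<And>X Y. M X Y = N X Y) \<Longrightarrow> N \<in> cspan G \<Longrightarrow> M \<in> cspan G"
proof -
  assume "\<And>X Y. M X Y = N X Y" "N \<in> cspan G"
  moreover have "M = N" using \<open>\<And>X Y. M X Y = N X Y\<close> by (intro ext) auto
  ultimately show ?thesis by simp
qed

lemma alg1: "c \<noteq> 0 \<Longrightarrow> (a::complex) = 1 / (2 * c) * (c * (a + b)) + \<i> / (2 * c) * (- \<i> * c * (a - b))"
  by (simp add: field_simps)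

lemma alg2: "c \<noteq> 0 \<Longrightarrow> (a::complex) = 1 / (2 * c) * (c * (b + a)) + - \<i> / (2 * c) * (- \<i> * c * (b - a))"
  by (simp add: field_simps)

lemma cR_nz: "cR n I J \<noteq> 0" by (simp add: cR_def)
lemma cD_nz: "cD n \<noteq> 0" by (simp add: cD_def)

lemma Tm_in_span:
  assumes R: "strict_linear_order_on (Pow (Nn n)) R" and md: "mdisj n K I J"
  shows "Tm n K I J \<in> cspan (bvec n ` Bidx n R)"
proof -
  have K: "K \<subseteq> Nn n" and I: "I \<subseteq> Nn n" and J: "J \<subseteq> Nn n" and IJ: "I \<inter> J = {}"
    using md by (auto simp: mdisj_def)
  show ?thesis
  proof (cases "I = J")
    case True
    then have e: "I = {}" "J = {}" using IJ by auto
    have b: "BD K \<in> Bidx n R" using K by (auto simp: Bidx_def)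
    show ?thesis
    proof (rule cspan_eqI)
      show "smul (1 / cD n) (bvec n (BD K)) \<in> cspan (bvec n ` Bidx n R)"
        by (rule cspan_smul, rule cspan_gen, rule imageI, rule b)
    next
      fix X Y show "Tm n K I J X Y = smul (1 / cD n) (bvec n (BD K)) X Y"
        unfolding e smul_app bvec_BD[OF K] cD_def[symmetric] using cD_nz[of n] by simp
    qed
  next
    case False
    then have "(I, J) \<in> R \<or> (J, I) \<in> R" using R_tot[OF R] I J by auto
    then show ?thesis
    proof
      assume r: "(I, J) \<in> R"
      have b: "BRe K I J \<in> Bidx n R" "BIm K I J \<in> Bidx n R" using md r by (auto simp: Bidx_def)
      show ?thesis
      proof (rule cspan_eqI)
        show "smul (1 / (2 * cR n I J)) (bvec n (BRe K I J)) + smul (\<i> / (2 * cR n I J)) (bvec n (BIm K I J)) \<in> cspan (bvec n ` Bidx n R)"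
          by (intro cspan_add cspan_smul cspan_gen imageI b)
      next
        fix X Y show "Tm n K I J X Y = (smul (1 / (2 * cR n I J)) (bvec n (BRe K I J)) + smul (\<i> / (2 * cR n I J)) (bvec n (BIm K I J))) X Y"
          unfolding plus_fun_apply smul_app bvec_BRe bvec_BIm by (rule alg1[OF cR_nz])
      qed
    next
      assume r: "(J, I) \<in> R"
      have md': "mdisj n K J I" using md by (rule mdisj_swap)
      have b: "BRe K J I \<in> Bidx n R" "BIm K J I \<in> Bidx n R" using md' r by (auto simp: Bidx_def)
      show ?thesis
      proof (rule cspan_eqI)
        show "smul (1 / (2 * cR n J I)) (bvec n (BRe K J I)) + smul (- \<i> / (2 * cR n J I)) (bvec n (BIm K J I)) \<in> cspan (bvec n ` Bidx n R)"
          by (intro cspan_add cspan_smul cspan_gen imageI b)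
      next
        fix X Y show "Tm n K I J X Y = (smul (1 / (2 * cR n J I)) (bvec n (BRe K J I)) + smul (- \<i> / (2 * cR n J I)) (bvec n (BIm K J I))) X Y"
          unfolding plus_fun_apply smul_app bvec_BRe bvec_BIm by (rule alg2[OF cR_nz])
      qed
    qed
  qed
qed


definition Eu :: "nat set \<Rightarrow> nat set \<Rightarrow> fop" where
  "Eu X Y = (\<lambda>X' Y'. if X' = X \<and> Y' = Y then 1 else 0)"

lemma wsign_nz: "wsign A B \<noteq> 0"
  by (simp add: wsign_def)

lemma Eu_span:
  assumes R: "strict_linear_order_on (Pow (Nn n)) R" and X: "X \<subseteq> Nn n" and Y: "Y \<subseteq> Nn n"
  shows "Eu X Y \<in> cspan (bvec n ` Bidx n R)"
proof -
  define I where "I = X - Y"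
  define J where "J = Y - X"
  define C where "C = Nn n - (I \<union> J)"
  define s where "s = wsign I (X \<inter> Y) * wsign J (X \<inter> Y)"
  have I: "I \<subseteq> Nn n" and J: "J \<subseteq> Nn n" and IJ: "I \<inter> J = {}" using X Y by (auto simp: I_def J_def)
  have fC: "finite C" by (simp add: C_def)
  have md: "mdisj n K I J" if "K \<in> Pow C" for K using that I J IJ by (auto simp: mdisj_def C_def)
  have KN: "K \<subseteq> Nn n" if "K \<in> Pow C" for K using that by (auto simp: C_def)
  have e1: "X - I = X \<inter> Y" "Y - J = X \<inter> Y" by (auto simp: I_def J_def)
  have ccXY: "cc n I J X Y = s"
    unfolding cc_formula e1 s_def using I J X Y by (auto simp: I_def J_def)
  have snz: "s \<noteq> 0" by (simp add: s_def wsign_nz)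
  have XC: "X \<inter> C = X \<inter> Y" using X by (auto simp: C_def I_def J_def)
  have key: "X' = X \<and> Y' = Y" if cc: "cc n I J X' Y' \<noteq> 0" and eq: "X' \<inter> C = X \<inter> C" for X' Y'
  proof -
    from cc_supp[OF cc] have h: "I \<subseteq> X'" "J \<subseteq> Y'" "X' - I = Y' - J" "X' \<subseteq> Nn n" "Y' \<subseteq> Nn n" by auto
    have "X' \<inter> J = {}" using h(3) IJ by blast
    then have "X' \<inter> C = X' - I" using h(4) by (auto simp: C_def)
    then have a: "X' - I = X \<inter> Y" using eq XC by simp
    then have "X' = I \<union> (X \<inter> Y)" using h(1) by blast
    then have "X' = X" by (auto simp: I_def)
    moreover have "Y' = J \<union> (X \<inter> Y)" using a h(2,3) by blast
    then have "Y' = Y" by (auto simp: J_def)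
    ultimately show ?thesis by simp
  qed
  have eq: "Eu X Y = (\<Sum>K\<in>Pow C. smul ((-1)^card (K \<inter> X) / (2^card C * s)) (Tm n K I J))"
  proof (intro ext)
    fix X' Y'
    have "(\<Sum>K\<in>Pow C. smul ((-1)^card (K \<inter> X) / (2^card C * s)) (Tm n K I J)) X' Y'
        = (\<Sum>K\<in>Pow C. cc n I J X' Y' / (2^card C * s) * ((-1)^card (K \<inter> X) * (-1)^card (K \<inter> X')))"
      unfolding fsum_app smul_app by (intro sum.cong refl) (simp add: Tm_formula[OF KN])
    also have "\<dots> = cc n I J X' Y' / (2^card C * s) * (\<Sum>K\<in>Pow C. (-1)^card (K \<inter> X) * (-1)^card (K \<inter> X'))"
      by (simp add: sum_distrib_left)
    also have "\<dots> = cc n I J X' Y' / (2^card C * s) * (if X \<inter> C = X' \<inter> C then 2^card C else 0)"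
      by (simp add: char_sum[OF fC])
    also have "\<dots> = Eu X Y X' Y'"
    proof (cases "X' = X \<and> Y' = Y")
      case True
      then show ?thesis using ccXY snz by (simp add: Eu_def)
    next
      case False
      then have "cc n I J X' Y' = 0 \<or> X \<inter> C \<noteq> X' \<inter> C" using key by metis
      then show ?thesis using False by (auto simp: Eu_def)
    qed
    finally show "Eu X Y X' Y' = (\<Sum>K\<in>Pow C. smul ((-1)^card (K \<inter> X) / (2^card C * s)) (Tm n K I J)) X' Y'" by simp
  qed
  show ?thesis unfolding eq
    by (intro cspan_sum cspan_smul Tm_in_span[OF R md]) (simp_all add: fC)
qed

lemma L2_decomp:
  assumes "M \<in> L2 n"
  shows "M = (\<Sum>X\<in>Pow (Nn n). \<Sum>Y\<in>Pow (Nn n). smul (M X Y) (Eu X Y))"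
proof (intro ext)
  fix X' Y'
  have "(\<Sum>X\<in>Pow (Nn n). \<Sum>Y\<in>Pow (Nn n). smul (M X Y) (Eu X Y)) X' Y'
      = (\<Sum>X\<in>Pow (Nn n). \<Sum>Y\<in>Pow (Nn n). if Y = Y' then (if X = X' then M X Y else 0) else 0)"
    unfolding fsum_app smul_app Eu_def by (intro sum.cong refl) auto
  also have "\<dots> = (\<Sum>X\<in>Pow (Nn n). if X = X' then (if Y' \<in> Pow (Nn n) then M X Y' else 0) else 0)"
    by (simp add: sum.delta')
  also have "\<dots> = (if X' \<in> Pow (Nn n) then (if Y' \<in> Pow (Nn n) then M X' Y' else 0) else 0)"
    by (simp add: sum.delta')
  also have "\<dots> = M X' Y'" using assms by (auto simp: L2_def)
  finally show "M X' Y' = (\<Sum>X\<in>Pow (Nn n). \<Sum>Y\<in>Pow (Nn n). smul (M X Y) (Eu X Y)) X' Y'" by simp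
qed

lemma span_L2:
  assumes R: "strict_linear_order_on (Pow (Nn n)) R" and M: "M \<in> L2 n"
  shows "M \<in> cspan (bvec n ` Bidx n R)"
  by (subst L2_decomp[OF M]) (intro cspan_sum cspan_smul Eu_span[OF R]; simp)

lemma cspan_L2: "G \<subseteq> L2 n \<Longrightarrow> cspan G \<subseteq> L2 n"
proof
  fix M assume G: "G \<subseteq> L2 n" and "M \<in> cspan G"
  then obtain S c where S: "finite S" "S \<subseteq> G" "M = (\<Sum>v\<in>S. smul (c v) v)" by (auto elim: cspan_E)
  show "M \<in> L2 n" unfolding L2_def
  proof (intro CollectI allI impI)
    fix X Y assume nz: "M X Y \<noteq> 0"
    have "\<exists>v\<in>S. v X Y \<noteq> 0"
    proof (rule ccontr)
      assume "\<not> (\<exists>v\<in>S. v X Y \<noteq> 0)"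
      then have "M X Y = 0" unfolding S(3) fsum_app smul_app by (simp add: sum.neutral)
      then show False using nz by simp
    qed
    then obtain v where v: "v \<in> S" "v X Y \<noteq> 0" by blast
    then have "v \<in> L2 n" using S(2) G by blast
    then show "X \<subseteq> Nn n \<and> Y \<subseteq> Nn n" using v(2) unfolding L2_def by blast
  qed
qed

lemma TmT_supp: "md3 n p \<Longrightarrow> TmT n p X Y \<noteq> 0 \<Longrightarrow> X \<subseteq> Nn n \<and> Y \<subseteq> Nn n"
  by (cases p) (auto simp: TmT_def md3_def mdisj_def dest: Tm_supp)

lemma bvec_L2: "i \<in> Bidx n R \<Longrightarrow> bvec n i \<in> L2 n"
  unfolding L2_def
proof (intro CollectI allI impI)
  fix X Y assume i: "i \<in> Bidx n R" and nz: "bvec n i X Y \<noteq> 0"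
  then have "TmT n (bP i) X Y \<noteq> 0 \<or> TmT n (bQ i) X Y \<noteq> 0" unfolding bvec_dec(1)[OF i] by auto
  then show "X \<subseteq> Nn n \<and> Y \<subseteq> Nn n" using TmT_supp bvec_dec(2,3)[OF i] by blast
qed

lemma Bidx_finite: "finite (Bidx n R)"
proof -
  let ?P = "Pow (Nn n)"
  have "Bidx n R \<subseteq> BD ` ?P \<union> (\<lambda>(K, I, J). BRe K I J) ` (?P \<times> ?P \<times> ?P) \<union> (\<lambda>(K, I, J). BIm K I J) ` (?P \<times> ?P \<times> ?P)"
    by (auto simp: Bidx_def mdisj_def image_iff)
  then show ?thesis by (rule finite_subset) auto
qed

lemma hs_sum2: "hs_inner n A (\<Sum>v\<in>S. smul (c v) v) = (\<Sum>v\<in>S. c v * hs_inner n A v)"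
proof -
  have "hs_inner n A (\<Sum>v\<in>S. smul (c v) v) = (\<Sum>X\<in>Pow (Nn n). \<Sum>Y\<in>Pow (Nn n). \<Sum>v\<in>S. c v * (cnj (A X Y) * v X Y))"
    unfolding hs_inner_def fsum_app smul_app by (simp add: sum_distrib_left algebra_simps)
  also have "\<dots> = (\<Sum>X\<in>Pow (Nn n). \<Sum>v\<in>S. \<Sum>Y\<in>Pow (Nn n). c v * (cnj (A X Y) * v X Y))"
    by (intro sum.cong refl sum.swap)
  also have "\<dots> = (\<Sum>v\<in>S. \<Sum>X\<in>Pow (Nn n). \<Sum>Y\<in>Pow (Nn n). c v * (cnj (A X Y) * v X Y))"
    by (rule sum.swap)
  also have "\<dots> = (\<Sum>v\<in>S. c v * hs_inner n A v)"
    unfolding hs_inner_def by (simp add: sum_distrib_left)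
  finally show ?thesis .
qed

lemma bvec_inj:
  assumes R: "strict_linear_order_on (Pow (Nn n)) R"
  shows "inj_on (bvec n) (Bidx n R)"
proof (rule inj_onI)
  fix i j assume i: "i \<in> Bidx n R" and j: "j \<in> Bidx n R" and e: "bvec n i = bvec n j"
  have "hs_inner n (bvec n i) (bvec n j) = 1" using ortho[OF R i i] e by simp
  then show "i = j" using ortho[OF R i j] by (auto split: if_splits)
qed

lemma expansion:
  assumes R: "strict_linear_order_on (Pow (Nn n)) R" and M: "M \<in> cspan (bvec n ` Bidx n R)"
  shows "M X Y = (\<Sum>i\<in>Bidx n R. hs_inner n (bvec n i) M * bvec n i X Y)"
proof -
  obtain S c where S: "finite S" "S \<subseteq> bvec n ` Bidx n R" "M = (\<Sum>v\<in>S. smul (c v) v)"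
    using M by (rule cspan_E)
  define S' where "S' = {j \<in> Bidx n R. bvec n j \<in> S}"
  have inj: "inj_on (bvec n) S'" using bvec_inj[OF R] by (rule inj_on_subset) (auto simp: S'_def)
  have SS: "S = bvec n ` S'" using S(2) by (auto simp: S'_def)
  have S'sub: "S' \<subseteq> Bidx n R" by (auto simp: S'_def)
  have fB: "finite (Bidx n R)" by (rule Bidx_finite)
  have coef: "hs_inner n (bvec n i) M = (if i \<in> S' then c (bvec n i) else 0)" if i: "i \<in> Bidx n R" for i
  proof -
    have "hs_inner n (bvec n i) M = (\<Sum>v\<in>S. c v * hs_inner n (bvec n i) v)"
      unfolding S(3) by (rule hs_sum2)
    also have "\<dots> = (\<Sum>j\<in>S'. c (bvec n j) * hs_inner n (bvec n i) (bvec n j))"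
      unfolding SS by (rule sum.reindex[OF inj, unfolded comp_def])
    also have "\<dots> = (\<Sum>j\<in>S'. if i = j then c (bvec n j) else 0)"
      by (intro sum.cong refl) (use i S'sub ortho[OF R] in auto)
    also have "\<dots> = (if i \<in> S' then c (bvec n i) else 0)"
      using finite_subset[OF S'sub fB] by (simp add: sum.delta)
    finally show ?thesis .
  qed
  have "(\<Sum>i\<in>Bidx n R. hs_inner n (bvec n i) M * bvec n i X Y)
      = (\<Sum>i\<in>Bidx n R. if i \<in> S' then c (bvec n i) * bvec n i X Y else 0)"
    by (intro sum.cong refl) (simp add: coef)
  also have "\<dots> = (\<Sum>i\<in>S'. c (bvec n i) * bvec n i X Y)"
    by (rule sum_restrict[OF fB S'sub])
  also have "\<dots> = (\<Sum>v\<in>S. c v * v X Y)"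
    unfolding SS by (rule sum.reindex[OF inj, unfolded comp_def, symmetric])
  also have "\<dots> = M X Y" unfolding S(3) fsum_app smul_app ..
  finally show ?thesis by simp
qed


definition Gen :: "nat \<Rightarrow> nat \<Rightarrow> fop set" where
  "Gen n k = {mmul n (cstar n w) (cann n e) | w e r s l.
                    w \<in> wedge n r \<and> e \<in> wedge n s \<and> r + s = 2 * l \<and> l \<le> k}"

lemma Ok_Gen: "Ok n k = cspan (Gen n k)" by (simp add: Ok_def Gen_def)

lemma cstar_app: "cstar n w X Y = (\<Sum>A\<in>Pow (Nn n). w A * cstarA n A X Y)"
  unfolding cstar_def fsum_app smul_app ..

lemma gen_expand:
  "mmul n (cstar n w) (cann n e) X Y = (\<Sum>A\<in>Pow (Nn n). \<Sum>B\<in>Pow (Nn n). w A * cnj (e B) * cc n A B X Y)"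
proof -
  let ?P = "Pow (Nn n)"
  have "mmul n (cstar n w) (cann n e) X Y
      = (\<Sum>Z\<in>?P. (\<Sum>A\<in>?P. w A * cstarA n A X Z) * (\<Sum>B\<in>?P. cnj (e B) * cnj (cstarA n B Y Z)))"
    unfolding mmul_app cann_def adj_app cstar_app by simp
  also have "\<dots> = (\<Sum>Z\<in>?P. \<Sum>A\<in>?P. \<Sum>B\<in>?P. w A * cnj (e B) * (cstarA n A X Z * cnj (cstarA n B Y Z)))"
    by (simp add: sum_product algebra_simps)
  also have "\<dots> = (\<Sum>A\<in>?P. \<Sum>Z\<in>?P. \<Sum>B\<in>?P. w A * cnj (e B) * (cstarA n A X Z * cnj (cstarA n B Y Z)))"
    by (rule sum.swap)
  also have "\<dots> = (\<Sum>A\<in>?P. \<Sum>B\<in>?P. \<Sum>Z\<in>?P. w A * cnj (e B) * (cstarA n A X Z * cnj (cstarA n B Y Z)))"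
    by (intro sum.cong refl sum.swap)
  also have "\<dots> = (\<Sum>A\<in>?P. \<Sum>B\<in>?P. w A * cnj (e B) * cc n A B X Y)"
    unfolding cc_def mmul_app adj_app by (simp add: sum_distrib_left)
  finally show ?thesis .
qed

lemma hs_sumI:
  assumes "\<And>X Y. N X Y = (\<Sum>t\<in>T. a t * P t X Y)"
  shows "hs_inner n M N = (\<Sum>t\<in>T. a t * hs_inner n M (P t))"
proof -
  have "hs_inner n M N = (\<Sum>X\<in>Pow (Nn n). \<Sum>Y\<in>Pow (Nn n). \<Sum>t\<in>T. a t * (cnj (M X Y) * P t X Y))"
    unfolding hs_inner_def assms by (simp add: sum_distrib_left algebra_simps)
  also have "\<dots> = (\<Sum>X\<in>Pow (Nn n). \<Sum>t\<in>T. \<Sum>Y\<in>Pow (Nn n). a t * (cnj (M X Y) * P t X Y))"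
    by (intro sum.cong refl sum.swap)
  also have "\<dots> = (\<Sum>t\<in>T. \<Sum>X\<in>Pow (Nn n). \<Sum>Y\<in>Pow (Nn n). a t * (cnj (M X Y) * P t X Y))"
    by (rule sum.swap)
  also have "\<dots> = (\<Sum>t\<in>T. a t * hs_inner n M (P t))"
    unfolding hs_inner_def by (simp add: sum_distrib_left)
  finally show ?thesis .
qed

lemma sign_split:
  assumes f: "finite I" "finite J" "finite Z" and LZ: "L \<subseteq> Z" and LI: "L \<inter> I = {}" and LJ: "L \<inter> J = {}"
  shows "wsign I Z * wsign J Z * (wsign (I \<union> L) (Z - L) * wsign (J \<union> L) (Z - L)) = wsign I L * wsign J L"
proof -
  have fL: "finite L" using LZ f(3) finite_subset by blast
  have fZL: "finite (Z - L)" using f(3) by simp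
  have Zs: "Z = L \<union> (Z - L)" using LZ by blast
  have d: "L \<inter> (Z - L) = {}" by blast
  have s1: "wsign I Z = wsign I L * wsign I (Z - L)"
    by (subst Zs, rule wsign_Un2[OF f(1) fL fZL d])
  have s2: "wsign J Z = wsign J L * wsign J (Z - L)"
    by (subst Zs, rule wsign_Un2[OF f(2) fL fZL d])
  have s3: "wsign (I \<union> L) (Z - L) = wsign I (Z - L) * wsign L (Z - L)"
    by (rule wsign_Un1[OF f(1) fL fZL]) (use LI in blast)
  have s4: "wsign (J \<union> L) (Z - L) = wsign J (Z - L) * wsign L (Z - L)"
    by (rule wsign_Un1[OF f(2) fL fZL]) (use LJ in blast)
  have alg: "(a * b) * (c * d) * ((b * e) * (d * e)) = (a * c) * ((b * b) * (d * d) * (e * e))" for a b c d e :: complex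
    by (simp add: ac_simps)
  show ?thesis unfolding s1 s2 s3 s4 alg wsign_sq by simp
qed

lemma card_m1_Un: "finite A \<Longrightarrow> finite B \<Longrightarrow> A \<inter> B = {} \<Longrightarrow> (-1::complex)^card (A \<union> B) = (-1)^card A * (-1)^card B"
  by (simp add: card_Un_disjoint power_add)

lemma DEG_core:
  assumes md: "mdisj n K I J" and A: "A \<subseteq> Nn n" and B: "B \<subseteq> Nn n"
    and nz: "hs_inner n (Tm n K I J) (cc n A B) \<noteq> 0"
  shows "\<exists>L. K \<subseteq> L \<and> A = I \<union> L \<and> B = J \<union> L \<and> L \<inter> I = {} \<and> L \<inter> J = {}"
proof -
  have K: "K \<subseteq> Nn n" and I: "I \<subseteq> Nn n" and J: "J \<subseteq> Nn n" and IJ: "I \<inter> J = {}"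
    and KI: "K \<inter> I = {}" and KJ: "K \<inter> J = {}" using md by (auto simp: mdisj_def)
  define C where "C = Nn n - (I \<union> J)"
  define L where "L = A \<inter> B"
  define f where "f Z = (-1)^card (K \<inter> Z) * (wsign I Z * wsign J Z) * cc n A B (I \<union> Z) (J \<union> Z)" for Z
  have fC: "finite C" by (simp add: C_def)
  have nz': "(\<Sum>Z\<in>Pow C. f Z) \<noteq> 0" using nz unfolding Tinner[OF md] f_def C_def .
  have "\<exists>Z\<in>Pow C. f Z \<noteq> 0"
  proof (rule ccontr)
    assume "\<not> (\<exists>Z\<in>Pow C. f Z \<noteq> 0)"
    then have "(\<Sum>Z\<in>Pow C. f Z) = 0" by (simp add: sum.neutral)
    then show False using nz' by simp
  qed
  then obtain Z0 where "Z0 \<in> Pow C" "f Z0 \<noteq> 0" by blast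
  then have Z0: "Z0 \<subseteq> C" and cc0: "cc n A B (I \<union> Z0) (J \<union> Z0) \<noteq> 0" by (auto simp: f_def)
  from cc_supp[OF cc0] have h: "(I \<union> Z0) - (J \<union> Z0) = A - B" "(J \<union> Z0) - (I \<union> Z0) = B - A" by auto
  have "(I \<union> Z0) - (J \<union> Z0) = I" "(J \<union> Z0) - (I \<union> Z0) = J" using Z0 IJ by (auto simp: C_def)
  with h have AB: "A - B = I" "B - A = J" by auto
  have eA: "A = I \<union> L" and eB: "B = J \<union> L" using AB by (auto simp: L_def)
  have LI: "L \<inter> I = {}" and LJ: "L \<inter> J = {}" using AB by (auto simp: L_def)
  have LC: "L \<subseteq> C" using A LI LJ by (auto simp: C_def L_def)
  have fzero: "f Z = 0" if "Z \<in> Pow C" "\<not> L \<subseteq> Z" for Z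
  proof -
    have "cc n A B (I \<union> Z) (J \<union> Z) = 0"
    proof (rule ccontr)
      assume "cc n A B (I \<union> Z) (J \<union> Z) \<noteq> 0"
      from cc_supp[OF this] have "A \<subseteq> I \<union> Z" by auto
      then show False using that(2) LI eA by blast
    qed
    then show ?thesis by (simp add: f_def)
  qed
  have fval: "f Z = wsign I L * wsign J L * (-1)^card (K \<inter> Z)" if Z: "Z \<subseteq> C" "L \<subseteq> Z" for Z
  proof -
    have fZ: "finite Z" using Z(1) fC finite_subset by blast
    have ZIJ: "Z \<inter> I = {}" "Z \<inter> J = {}" using Z(1) unfolding C_def by blast+
    have e1: "(I \<union> Z) - A = Z - L" "(J \<union> Z) - B = Z - L" using ZIJ eA eB LI LJ IJ by blast+
    have conds: "A \<subseteq> Nn n \<and> B \<subseteq> Nn n \<and> I \<union> Z \<subseteq> Nn n \<and> J \<union> Z \<subseteq> Nn n \<and> A \<subseteq> I \<union> Z \<and> B \<subseteq> J \<union> Z \<and> (I \<union> Z) - A = (J \<union> Z) - B"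
      using A B Z I J eA eB e1 unfolding C_def by blast
    have c: "cc n A B (I \<union> Z) (J \<union> Z) = wsign (I \<union> L) (Z - L) * wsign (J \<union> L) (Z - L)"
    proof -
      have c0: "cc n A B (I \<union> Z) (J \<union> Z) = wsign A ((I \<union> Z) - A) * wsign B ((I \<union> Z) - A)"
        unfolding cc_formula by (rule if_P[OF conds])
      show ?thesis using c0 unfolding e1(1) by (simp add: eA[symmetric] eB[symmetric])
    qed
    have "f Z = (-1)^card (K \<inter> Z) * (wsign I Z * wsign J Z * (wsign (I \<union> L) (Z - L) * wsign (J \<union> L) (Z - L)))"
      unfolding f_def c by (simp add: ac_simps)
    also have "\<dots> = (-1)^card (K \<inter> Z) * (wsign I L * wsign J L)"
      using sign_split[OF finite_subset[OF I finite_Nn] finite_subset[OF J finite_Nn] fZ Z(2) LI LJ] by simp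
    finally show ?thesis by simp
  qed
  have "(\<Sum>Z\<in>Pow C. f Z) = (\<Sum>Z\<in>Pow C. if L \<subseteq> Z then f Z else 0)"
    by (intro sum.cong refl) (use fzero in auto)
  also have "\<dots> = sum f {Z \<in> Pow C. L \<subseteq> Z}"
    by (rule sum.inter_filter[symmetric]) (simp add: fC)
  also have "\<dots> = (\<Sum>W\<in>Pow (C - L). f (L \<union> W))"
    by (rule sum_sup_reindex[OF LC])
  also have "\<dots> = (\<Sum>W\<in>Pow (C - L). wsign I L * wsign J L * (-1)^card (K \<inter> L) * ((-1)^card (W \<inter> K) * (-1)^card (W \<inter> {})))"
  proof (intro sum.cong refl)
    fix W assume W: "W \<in> Pow (C - L)"
    have fW: "finite W" using W fC finite_subset by auto
    have fL: "finite L" using LC fC finite_subset by auto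
    have "K \<inter> (L \<union> W) = (K \<inter> L) \<union> (K \<inter> W)" by blast
    then have "(-1::complex)^card (K \<inter> (L \<union> W)) = (-1)^card (K \<inter> L) * (-1)^card (K \<inter> W)"
      using card_m1_Un[of "K \<inter> L" "K \<inter> W"] fW fL W by auto
    then show "f (L \<union> W) = wsign I L * wsign J L * (-1)^card (K \<inter> L) * ((-1)^card (W \<inter> K) * (-1)^card (W \<inter> {}))"
    proof -
      have "f (L \<union> W) = wsign I L * wsign J L * (-1)^card (K \<inter> (L \<union> W))"
        by (rule fval) (use W LC in auto)
      then show ?thesis using \<open>(-1::complex)^card (K \<inter> (L \<union> W)) = _\<close> by (simp add: Int_commute ac_simps)
    qed
  qed
  also have "\<dots> = wsign I L * wsign J L * (-1)^card (K \<inter> L) * (if K \<inter> (C - L) = {} \<inter> (C - L) then 2 ^ card (C - L) else 0)"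
  proof -
    have cs: "(\<Sum>W\<in>Pow (C - L). (-1::complex)^card (W \<inter> K) * (-1)^card (W \<inter> {})) = (if K \<inter> (C - L) = {} \<inter> (C - L) then 2 ^ card (C - L) else 0)"
      by (rule char_sum) (simp add: fC)
    show ?thesis by (simp only: sum_distrib_left[symmetric] cs)
  qed
  finally have sumeq: "(\<Sum>Z\<in>Pow C. f Z) = wsign I L * wsign J L * (-1)^card (K \<inter> L) * (if K \<inter> (C - L) = {} \<inter> (C - L) then 2 ^ card (C - L) else 0)" .
  have "K \<inter> (C - L) = {}"
  proof (rule ccontr)
    assume a: "K \<inter> (C - L) \<noteq> {}"
    have "(if K \<inter> (C - L) = {} \<inter> (C - L) then 2 ^ card (C - L) else 0::complex) = 0" using a by simp
    then have "(\<Sum>Z\<in>Pow C. f Z) = 0" unfolding sumeq by simp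
    then show False using nz' by simp
  qed
  moreover have "K \<subseteq> C" using K KI KJ by (auto simp: C_def)
  ultimately have "K \<subseteq> L" by blast
  then show ?thesis using eA eB LI LJ by blast
qed


lemma sgn_sq2: "wsign I L * wsign J L * (wsign I L * wsign J L) = 1"
  by (simp only: sq4 wsign_sq) simp

lemma cc_L:
  assumes md: "mdisj n K I J" and L: "L \<subseteq> K"
  shows "cc n (I \<union> L) (J \<union> L) X Y = (if L \<subseteq> X then wsign I L * wsign J L * cc n I J X Y else 0)"
proof -
  have K: "K \<subseteq> Nn n" and I: "I \<subseteq> Nn n" and J: "J \<subseteq> Nn n" and IJ: "I \<inter> J = {}"
    and KI: "K \<inter> I = {}" and KJ: "K \<inter> J = {}" using md by (auto simp: mdisj_def)
  have LI: "L \<inter> I = {}" and LJ: "L \<inter> J = {}" using L KI KJ by blast+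
  show ?thesis
  proof (cases "cc n I J X Y = 0")
    case True
    have "cc n (I \<union> L) (J \<union> L) X Y = 0"
    proof (rule ccontr)
      assume "cc n (I \<union> L) (J \<union> L) X Y \<noteq> 0"
      from cc_supp[OF this] have h: "I \<union> L \<subseteq> X" "J \<union> L \<subseteq> Y" "X - (I \<union> L) = Y - (J \<union> L)"
        "X \<subseteq> Nn n" "Y \<subseteq> Nn n" by auto
      have "X - I = Y - J" using h(1,2,3) LI LJ by blast
      then have "cc n I J X Y = wsign I (X - I) * wsign J (X - I)"
        unfolding cc_formula using I J h by auto
      then show False using True by (simp add: wsign_nz)
    qed
    then show ?thesis using True by simp
  next
    case False
    from cc_supp[OF False] have h: "I \<subseteq> X" "J \<subseteq> Y" "X - I = Y - J" "X \<subseteq> Nn n" "Y \<subseteq> Nn n" by auto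
    have c0: "cc n I J X Y = wsign I (X - I) * wsign J (X - I)"
      unfolding cc_formula using I J h by auto
    show ?thesis
    proof (cases "L \<subseteq> X")
      case True
      define Z where "Z = X - I"
      have LZ: "L \<subseteq> Z" using True LI by (auto simp: Z_def)
      have fZ: "finite Z" unfolding Z_def using finite_subset[OF h(4) finite_Nn] by simp
      have conds: "I \<union> L \<subseteq> Nn n \<and> J \<union> L \<subseteq> Nn n \<and> X \<subseteq> Nn n \<and> Y \<subseteq> Nn n \<and> I \<union> L \<subseteq> X \<and> J \<union> L \<subseteq> Y \<and> X - (I \<union> L) = Y - (J \<union> L)"
        using I J K L h True LI LJ by blast
      have e: "X - (I \<union> L) = Z - L" by (auto simp: Z_def)
      have c1: "cc n (I \<union> L) (J \<union> L) X Y = wsign (I \<union> L) (Z - L) * wsign (J \<union> L) (Z - L)"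
      proof -
        have "cc n (I \<union> L) (J \<union> L) X Y = wsign (I \<union> L) (X - (I \<union> L)) * wsign (J \<union> L) (X - (I \<union> L))"
          unfolding cc_formula by (rule if_P[OF conds])
        then show ?thesis unfolding e .
      qed
      have ss: "wsign I Z * wsign J Z * (wsign (I \<union> L) (Z - L) * wsign (J \<union> L) (Z - L)) = wsign I L * wsign J L"
        by (rule sign_split[OF finite_subset[OF I finite_Nn] finite_subset[OF J finite_Nn] fZ LZ LI LJ])
      have "wsign (I \<union> L) (Z - L) * wsign (J \<union> L) (Z - L)
          = (wsign I Z * wsign J Z * (wsign I Z * wsign J Z)) * (wsign (I \<union> L) (Z - L) * wsign (J \<union> L) (Z - L))"
        by (simp only: sgn_sq2 mult_1_left)
      also have "\<dots> = wsign I Z * wsign J Z * (wsign I Z * wsign J Z * (wsign (I \<union> L) (Z - L) * wsign (J \<union> L) (Z - L)))"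
        by (simp only: mult.assoc)
      also have "\<dots> = wsign I L * wsign J L * (wsign I Z * wsign J Z)" unfolding ss by (simp only: mult.commute)
      finally show ?thesis unfolding c1 c0 using True by (simp add: Z_def)
    next
      case nL: False
      have "cc n (I \<union> L) (J \<union> L) X Y = 0"
      proof (rule ccontr)
        assume "cc n (I \<union> L) (J \<union> L) X Y \<noteq> 0"
        from cc_supp[OF this] have "I \<union> L \<subseteq> X" by auto
        then show False using nL by blast
      qed
      then show ?thesis using nL by simp
    qed
  qed
qed

lemma Tm_expand:
  assumes md: "mdisj n K I J"
  shows "Tm n K I J X Y = (\<Sum>L\<in>Pow K. (-2)^card L * (wsign I L * wsign J L) * cc n (I \<union> L) (J \<union> L) X Y)"
proof -
  have K: "K \<subseteq> Nn n" using md by (auto simp: mdisj_def)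
  have fK: "finite K" using finite_subset[OF K finite_Nn] .
  have "(\<Sum>L\<in>Pow K. (-2)^card L * (wsign I L * wsign J L) * cc n (I \<union> L) (J \<union> L) X Y)
      = (\<Sum>L\<in>Pow K. if L \<subseteq> X then (-2)^card L * cc n I J X Y else 0)"
  proof (intro sum.cong refl)
    fix L assume "L \<in> Pow K"
    then have L: "L \<subseteq> K" by auto
    have "(wsign I L * wsign J L) * (wsign I L * wsign J L * cc n I J X Y) = cc n I J X Y"
    proof -
      have "(wsign I L * wsign J L) * (wsign I L * wsign J L * cc n I J X Y) = (wsign I L * wsign J L * (wsign I L * wsign J L)) * cc n I J X Y"
        by (simp only: mult.assoc)
      then show ?thesis by (simp only: sgn_sq2 mult_1_left)
    qed
    then show "(-2)^card L * (wsign I L * wsign J L) * cc n (I \<union> L) (J \<union> L) X Y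
        = (if L \<subseteq> X then (-2)^card L * cc n I J X Y else 0)"
      unfolding cc_L[OF md L] by (simp add: mult.assoc)
  qed
  also have "\<dots> = (\<Sum>L\<in>{L \<in> Pow K. L \<subseteq> X}. (-2)^card L * cc n I J X Y)"
    by (rule sum.inter_filter[symmetric]) (simp add: fK)
  also have "{L \<in> Pow K. L \<subseteq> X} = Pow (K \<inter> X)" by auto
  also have "(\<Sum>L\<in>Pow (K \<inter> X). (-2)^card L * cc n I J X Y) = (\<Sum>L\<in>Pow (K \<inter> X). (-2::complex)^card L) * cc n I J X Y"
    by (simp add: sum_distrib_right)
  also have "(\<Sum>L\<in>Pow (K \<inter> X). (-2::complex)^card L) = (-1)^card (K \<inter> X)"
    by (rule pow_sum) (use fK in auto)
  finally show ?thesis by (simp add: Tm_formula[OF K])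
qed

lemma delta_wedge: "A \<subseteq> Nn n \<Longrightarrow> (\<lambda>X. if X = A then 1 else 0) \<in> wedge n (card A)"
  by (auto simp: wedge_def)

lemma cstar_delta: "A \<subseteq> Nn n \<Longrightarrow> cstar n (\<lambda>X. if X = A then 1 else 0) = cstarA n A"
proof (intro ext)
  fix X Y assume A: "A \<subseteq> Nn n"
  have "cstar n (\<lambda>X. if X = A then 1 else 0) X Y = (\<Sum>A'\<in>Pow (Nn n). if A' = A then cstarA n A X Y else 0)"
    unfolding cstar_app by (intro sum.cong refl) auto
  also have "\<dots> = cstarA n A X Y" using A by (simp add: sum.delta')
  finally show "cstar n (\<lambda>X. if X = A then 1 else 0) X Y = cstarA n A X Y" .
qed

lemma cc_gen:
  assumes "A \<subseteq> Nn n" "B \<subseteq> Nn n" "card A + card B = 2 * l" "l \<le> k"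
  shows "cc n A B \<in> Gen n k"
proof -
  have "cc n A B = mmul n (cstar n (\<lambda>X. if X = A then 1 else 0)) (cann n (\<lambda>X. if X = B then 1 else 0))"
    unfolding cann_def cstar_delta[OF assms(1)] cstar_delta[OF assms(2)] cc_def ..
  then show ?thesis unfolding Gen_def using delta_wedge[OF assms(1)] delta_wedge[OF assms(2)] assms(3,4) by blast
qed

lemma Tm_Ok:
  assumes md: "mdisj n K I J" and deg: "card I + card J + 2 * card K = 2 * l" and lk: "l \<le> k"
  shows "Tm n K I J \<in> Ok n k"
proof -
  have K: "K \<subseteq> Nn n" and I: "I \<subseteq> Nn n" and J: "J \<subseteq> Nn n"
    and KI: "K \<inter> I = {}" and KJ: "K \<inter> J = {}" using md by (auto simp: mdisj_def)
  have fK: "finite K" using finite_subset[OF K finite_Nn] .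
  have fI: "finite I" using finite_subset[OF I finite_Nn] .
  have fJ: "finite J" using finite_subset[OF J finite_Nn] .
  have eq: "Tm n K I J = (\<Sum>L\<in>Pow K. smul ((-2)^card L * (wsign I L * wsign J L)) (cc n (I \<union> L) (J \<union> L)))"
    by (intro ext) (simp add: Tm_expand[OF md] fsum_app)
  have g: "cc n (I \<union> L) (J \<union> L) \<in> Gen n k" if "L \<in> Pow K" for L
  proof -
    have L: "L \<subseteq> K" using that by auto
    have fL: "finite L" using finite_subset[OF L fK] .
    have c1: "card (I \<union> L) = card I + card L" using L KI fI fL by (subst card_Un_disjoint) auto
    have c2: "card (J \<union> L) = card J + card L" using L KJ fJ fL by (subst card_Un_disjoint) auto
    have cL: "card L \<le> card K" using card_mono[OF fK L] .
    show ?thesis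
      by (rule cc_gen[where l="l - card K + card L"]) (use I J K L c1 c2 cL deg lk in auto)
  qed
  show ?thesis unfolding eq Ok_Gen
    by (intro cspan_sum cspan_smul cspan_gen g) (simp add: fK)
qed


lemma DEG_p:
  assumes md: "mdisj n K I J" and A: "A \<subseteq> Nn n" and B: "B \<subseteq> Nn n"
    and nz: "hs_inner n (Tm n K I J) (cc n A B) \<noteq> 0" and deg: "card A + card B = 2 * l"
  shows "\<exists>l'\<le>l. card I + card J + 2 * card K = 2 * l'"
proof -
  obtain L where L: "K \<subseteq> L" "A = I \<union> L" "B = J \<union> L" "L \<inter> I = {}" "L \<inter> J = {}"
    using DEG_core[OF md A B nz] by blast
  have fA: "finite A" using finite_subset[OF A finite_Nn] .
  have fB: "finite B" using finite_subset[OF B finite_Nn] .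
  have fI: "finite I" "finite L" using fA L(2) by auto
  have fJ: "finite J" using fB L(3) by auto
  have cA: "card A = card I + card L" unfolding L(2) using fI L(4) by (subst card_Un_disjoint) auto
  have cB: "card B = card J + card L" unfolding L(3) using fJ fI(2) L(5) by (subst card_Un_disjoint) auto
  have cK: "card K \<le> card L" using card_mono[OF fI(2) L(1)] .
  show ?thesis
    by (rule exI[of _ "l - card L + card K"]) (use cA cB cK deg in arith)
qed

lemma deg_to_ok:
  assumes i: "i \<in> Bidx n R" and p: "p = bP i \<or> p = bQ i"
    and nz: "hs_inner n (TmT n p) (cc n A B) \<noteq> 0"
    and A: "A \<subseteq> Nn n" and B: "B \<subseteq> Nn n" and deg: "card A + card B = 2 * l" and lk: "l \<le> k"
  shows "bdeg_ok k i"
  using i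
proof (cases rule: Bidx_E)
  case (1 K)
  then have pe: "p = (K, {}, {})" using p by auto
  have "\<exists>l'\<le>l. card {} + card {} + 2 * card K = 2 * l'"
    using DEG_p[OF mdisj_BD[OF 1(2)] A B _ deg] nz pe by (simp add: TmT_def)
  then show ?thesis using 1 lk by auto
next
  case (2 K I J)
  show ?thesis
  proof (cases "p = (K, I, J)")
    case True
    have "\<exists>l'\<le>l. card I + card J + 2 * card K = 2 * l'"
      using DEG_p[OF 2(2) A B _ deg] nz True by (simp add: TmT_def)
    then show ?thesis using 2 lk by (auto intro: le_trans)
  next
    case False
    then have pe: "p = (K, J, I)" using p 2 by auto
    have "\<exists>l'\<le>l. card J + card I + 2 * card K = 2 * l'"
      using DEG_p[OF mdisj_swap[OF 2(2)] A B _ deg] nz pe by (simp add: TmT_def)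
    then show ?thesis using 2 lk by (auto simp: add.commute intro: le_trans)
  qed
next
  case (3 K I J)
  show ?thesis
  proof (cases "p = (K, I, J)")
    case True
    have "\<exists>l'\<le>l. card I + card J + 2 * card K = 2 * l'"
      using DEG_p[OF 3(2) A B _ deg] nz True by (simp add: TmT_def)
    then show ?thesis using 3 lk by (auto intro: le_trans)
  next
    case False
    then have pe: "p = (K, J, I)" using p 3 by auto
    have "\<exists>l'\<le>l. card J + card I + 2 * card K = 2 * l'"
      using DEG_p[OF mdisj_swap[OF 3(2)] A B _ deg] nz pe by (simp add: TmT_def)
    then show ?thesis using 3 lk by (auto simp: add.commute intro: le_trans)
  qed
qed

lemma dsum_prod: "(\<Sum>A\<in>P. \<Sum>B\<in>Q. f A B) = (\<Sum>t\<in>P \<times> Q. f (fst t) (snd t))"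
  unfolding sum.cartesian_product by (simp add: case_prod_unfold)

lemma DEG_gen:
  assumes i: "i \<in> Bidx n R" and nd: "\<not> bdeg_ok k i" and g: "g \<in> Gen n k"
  shows "hs_inner n (bvec n i) g = 0"
proof -
  obtain w e r s l where ge: "g = mmul n (cstar n w) (cann n e)" and w: "w \<in> wedge n r" and e: "e \<in> wedge n s"
    and rs: "r + s = 2 * l" and lk: "l \<le> k"
    using g unfolding Gen_def by blast
  let ?T = "Pow (Nn n) \<times> Pow (Nn n)"
  have ex: "g X Y = (\<Sum>t\<in>?T. (w (fst t) * cnj (e (snd t))) * cc n (fst t) (snd t) X Y)" for X Y
    unfolding ge gen_expand dsum_prod ..
  have "hs_inner n (bvec n i) g = (\<Sum>t\<in>?T. (w (fst t) * cnj (e (snd t))) * hs_inner n (bvec n i) (cc n (fst t) (snd t)))"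
    by (rule hs_sumI[OF ex])
  also have "\<dots> = (\<Sum>t\<in>?T. 0)"
  proof (intro sum.cong refl)
    fix t assume t: "t \<in> ?T"
    obtain A B where tAB: "t = (A, B)" by fastforce
    have A: "A \<subseteq> Nn n" and B: "B \<subseteq> Nn n" using t tAB by auto
    show "(w (fst t) * cnj (e (snd t))) * hs_inner n (bvec n i) (cc n (fst t) (snd t)) = 0"
    proof (cases "w A = 0 \<or> e B = 0")
      case True
      then show ?thesis using tAB by auto
    next
      case False
      then have cA: "card A = r" and cB: "card B = s" using w e by (auto simp: wedge_def)
      have z: "hs_inner n (TmT n p) (cc n A B) = 0" if "p = bP i \<or> p = bQ i" for p
        using deg_to_ok[OF i that _ A B _ lk] cA cB rs nd by auto
      have "hs_inner n (bvec n i) (cc n A B) = cnj (ca n i) * hs_inner n (TmT n (bP i)) (cc n A B) + cnj (cb n i) * hs_inner n (TmT n (bQ i)) (cc n A B)"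
        by (rule hs_lin1[OF bvec_dec(1)[OF i]])
      then have "hs_inner n (bvec n i) (cc n A B) = 0" using z by simp
      then show ?thesis using tAB by simp
    qed
  qed
  finally show ?thesis by simp
qed

lemma DEG:
  assumes i: "i \<in> Bidx n R" and nd: "\<not> bdeg_ok k i" and M: "M \<in> Ok n k"
  shows "hs_inner n (bvec n i) M = 0"
proof -
  obtain S c where S: "finite S" "S \<subseteq> Gen n k" "M = (\<Sum>v\<in>S. smul (c v) v)"
    using M unfolding Ok_Gen by (rule cspan_E)
  have "hs_inner n (bvec n i) M = (\<Sum>v\<in>S. c v * hs_inner n (bvec n i) v)" unfolding S(3) by (rule hs_sum2)
  also have "\<dots> = 0" using DEG_gen[OF i nd] S(2) by (simp add: subset_iff)
  finally show ?thesis .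
qed

lemma bvec_Ok:
  assumes i: "i \<in> Bidx n R" and ok: "bdeg_ok k i"
  shows "bvec n i \<in> Ok n k"
proof -
  have eq: "bvec n i = smul (ca n i) (TmT n (bP i)) + smul (cb n i) (TmT n (bQ i))"
    by (intro ext) (simp add: bvec_dec(1)[OF i])
  have "TmT n (bP i) \<in> Ok n k \<and> TmT n (bQ i) \<in> Ok n k"
    using i
  proof (cases rule: Bidx_E)
    case (1 K)
    have "Tm n K {} {} \<in> Ok n k" by (rule Tm_Ok[OF mdisj_BD[OF 1(2)], of "card K"]) (use ok 1 in auto)
    then show ?thesis using 1 by (simp add: TmT_def)
  next
    case (2 K I J)
    obtain l where l: "l \<le> k" "card I + card J + 2 * card K = 2 * l" using ok 2 by auto
    have "Tm n K I J \<in> Ok n k" by (rule Tm_Ok[OF 2(2) l(2) l(1)])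
    moreover have "Tm n K J I \<in> Ok n k" by (rule Tm_Ok[OF mdisj_swap[OF 2(2)] _ l(1)]) (use l in simp)
    ultimately show ?thesis using 2 by (simp add: TmT_def)
  next
    case (3 K I J)
    obtain l where l: "l \<le> k" "card I + card J + 2 * card K = 2 * l" using ok 3 by auto
    have "Tm n K I J \<in> Ok n k" by (rule Tm_Ok[OF 3(2) l(2) l(1)])
    moreover have "Tm n K J I \<in> Ok n k" by (rule Tm_Ok[OF mdisj_swap[OF 3(2)] _ l(1)]) (use l in simp)
    ultimately show ?thesis using 3 by (simp add: TmT_def)
  qed
  then show ?thesis unfolding eq Ok_Gen by (intro cspan_add cspan_smul) auto
qed

lemma Gen_L2: "Gen n k \<subseteq> L2 n"
proof
  fix g assume "g \<in> Gen n k"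
  then obtain w e where ge: "g = mmul n (cstar n w) (cann n e)" unfolding Gen_def by blast
  show "g \<in> L2 n" unfolding L2_def
  proof (intro CollectI allI impI)
    fix X Y assume nz: "g X Y \<noteq> 0"
    show "X \<subseteq> Nn n \<and> Y \<subseteq> Nn n"
    proof (rule ccontr)
      assume a: "\<not> (X \<subseteq> Nn n \<and> Y \<subseteq> Nn n)"
      have "\<And>A B. cc n A B X Y = 0" using a by (auto simp: cc_formula)
      then have "g X Y = 0" unfolding ge gen_expand by simp
      then show False using nz by simp
    qed
  qed
qed

lemma Ok_L2: "Ok n k \<subseteq> L2 n"
  unfolding Ok_Gen by (rule cspan_L2[OF Gen_L2])

lemma Osa_eq:
  assumes R: "strict_linear_order_on (Pow (Nn n)) R"
  shows "{i \<in> Bidx n R. bvec n i \<in> Osa n k} = {i \<in> Bidx n R. bdeg_ok k i}"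
proof (intro Collect_cong conj_cong refl)
  fix i assume i: "i \<in> Bidx n R"
  show "bvec n i \<in> Osa n k \<longleftrightarrow> bdeg_ok k i"
  proof
    assume "bvec n i \<in> Osa n k"
    then have M: "bvec n i \<in> Ok n k" by (simp add: Osa_def)
    show "bdeg_ok k i"
    proof (rule ccontr)
      assume "\<not> bdeg_ok k i"
      from DEG[OF i this M] show False using ortho[OF R i i] by simp
    qed
  next
    assume "bdeg_ok k i"
    then show "bvec n i \<in> Osa n k" using bvec_Ok[OF i] adj_bvec[OF i] by (simp add: Osa_def)
  qed
qed

lemma hs_real:
  assumes a: "adj a = a" and b: "adj b = b"
  shows "cnj (hs_inner n a b) = hs_inner n a b"
proof -
  have ea: "cnj (a Y X) = a X Y" for X Y
  proof -
    have "adj a X Y = a X Y" using a by simp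
    then show ?thesis by simp
  qed
  have eb: "cnj (b X Y) = b Y X" for X Y
  proof -
    have "adj b Y X = b Y X" using b by simp
    then show ?thesis by simp
  qed
  have "cnj (hs_inner n a b) = (\<Sum>X\<in>Pow (Nn n). \<Sum>Y\<in>Pow (Nn n). cnj (a Y X) * b Y X)"
    unfolding hs_inner_def by (simp add: ea eb)
  also have "\<dots> = (\<Sum>Y\<in>Pow (Nn n). \<Sum>X\<in>Pow (Nn n). cnj (a Y X) * b Y X)" by (rule sum.swap)
  also have "\<dots> = hs_inner n a b" unfolding hs_inner_def ..
  finally show ?thesis .
qed

lemma real_Re: "cnj z = z \<Longrightarrow> complex_of_real (Re z) = z"
proof -
  assume h: "cnj z = z"
  have "Im z = 0" using arg_cong[OF h, of Im] by simp
  then show ?thesis by (simp add: complex_eq_iff)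
qed

lemma rspan_eq:
  assumes R: "strict_linear_order_on (Pow (Nn n)) R"
  shows "rspan (bvec n ` {i \<in> Bidx n R. bvec n i \<in> Osa n k}) = Osa n k"
proof
  let ?Sk = "{i \<in> Bidx n R. bvec n i \<in> Osa n k}"
  show "rspan (bvec n ` ?Sk) \<subseteq> Osa n k"
  proof
    fix M assume "M \<in> rspan (bvec n ` ?Sk)"
    then obtain S and c :: "fop \<Rightarrow> real" where S: "finite S" "S \<subseteq> bvec n ` ?Sk"
      "M = (\<Sum>v\<in>S. smul (complex_of_real (c v)) v)" unfolding rspan_def by blast
    have vO: "v \<in> Osa n k" if "v \<in> S" for v using that S(2) by auto
    have "M \<in> Ok n k" unfolding S(3) Ok_Gen
      by (intro cspan_sum cspan_smul) (use S(1) vO in \<open>auto simp: Osa_def Ok_Gen\<close>)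
    moreover have "adj M = M"
    proof (intro ext)
      fix X Y
      have "\<And>v. v \<in> S \<Longrightarrow> cnj (v Y X) = v X Y"
      proof -
        fix v assume "v \<in> S"
        then have "adj v = v" using vO by (simp add: Osa_def)
        then have "adj v X Y = v X Y" by simp
        then show "cnj (v Y X) = v X Y" by simp
      qed
      then show "adj M X Y = M X Y" unfolding S(3) adj_app fsum_app smul_app by simp
    qed
    ultimately show "M \<in> Osa n k" by (simp add: Osa_def)
  qed
next
  let ?Sk = "{i \<in> Bidx n R. bvec n i \<in> Osa n k}"
  show "Osa n k \<subseteq> rspan (bvec n ` ?Sk)"
  proof
    fix M assume MO: "M \<in> Osa n k"
    then have MOk: "M \<in> Ok n k" and Ma: "adj M = M" by (auto simp: Osa_def)
    have ML2: "M \<in> L2 n" using Ok_L2 MOk by blast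
    have Msp: "M \<in> cspan (bvec n ` Bidx n R)" by (rule span_L2[OF R ML2])
    have fB: "finite (Bidx n R)" by (rule Bidx_finite)
    have Sksub: "?Sk \<subseteq> Bidx n R" by auto
    have fSk: "finite ?Sk" using finite_subset[OF Sksub fB] .
    have inj: "inj_on (bvec n) ?Sk" using bvec_inj[OF R] Sksub by (rule inj_on_subset)
    have eq: "M = (\<Sum>v\<in>bvec n ` ?Sk. smul (complex_of_real (Re (hs_inner n v M))) v)"
    proof (intro ext)
      fix X Y
      have "(\<Sum>v\<in>bvec n ` ?Sk. smul (complex_of_real (Re (hs_inner n v M))) v) X Y
          = (\<Sum>i\<in>?Sk. complex_of_real (Re (hs_inner n (bvec n i) M)) * bvec n i X Y)"
        unfolding fsum_app smul_app by (rule sum.reindex[OF inj, unfolded comp_def])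
      also have "\<dots> = (\<Sum>i\<in>?Sk. hs_inner n (bvec n i) M * bvec n i X Y)"
      proof (intro sum.cong refl)
        fix i assume "i \<in> ?Sk"
        then have "adj (bvec n i) = bvec n i" by (auto simp: Osa_def)
        then have "cnj (hs_inner n (bvec n i) M) = hs_inner n (bvec n i) M" by (rule hs_real[OF _ Ma])
        then show "complex_of_real (Re (hs_inner n (bvec n i) M)) * bvec n i X Y = hs_inner n (bvec n i) M * bvec n i X Y"
          by (simp add: real_Re)
      qed
      also have "\<dots> = (\<Sum>i\<in>Bidx n R. hs_inner n (bvec n i) M * bvec n i X Y)"
      proof (rule sum.mono_neutral_left[OF fB Sksub])
        show "\<forall>i\<in>Bidx n R - ?Sk. hs_inner n (bvec n i) M * bvec n i X Y = 0"
        proof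
          fix i assume "i \<in> Bidx n R - ?Sk"
          then have i: "i \<in> Bidx n R" and "i \<notin> ?Sk" by auto
          then have "\<not> bdeg_ok k i" using Osa_eq[OF R, of k] by blast
          then show "hs_inner n (bvec n i) M * bvec n i X Y = 0" using DEG[OF i _ MOk] by simp
        qed
      qed
      also have "\<dots> = M X Y" by (rule expansion[OF R Msp, symmetric])
      finally show "M X Y = (\<Sum>v\<in>bvec n ` ?Sk. smul (complex_of_real (Re (hs_inner n v M))) v) X Y" by simp
    qed
    show "M \<in> rspan (bvec n ` ?Sk)" unfolding rspan_def
      by (rule CollectI, rule exI[of _ "bvec n ` ?Sk"], rule exI[of _ "\<lambda>v. Re (hs_inner n v M)"]) (use eq fSk in simp)
  qed
qed

theorem theorem4p6:
  fixes n :: nat and R :: "(nat set \<times> nat set) set"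
  assumes "strict_linear_order_on (Pow (Nn n)) R"
  shows "(\<forall>i\<in>Bidx n R. adj (bvec n i) = bvec n i)
       \<and> (\<forall>i\<in>Bidx n R. bvec n i \<in> L2 n)
       \<and> orthonormal_fam n (Bidx n R) (bvec n)
       \<and> cspan (bvec n ` Bidx n R) = L2 n
       \<and> (\<forall>k::nat.
            {i \<in> Bidx n R. bvec n i \<in> Osa n k} = {i \<in> Bidx n R. bdeg_ok k i}
          \<and> rspan (bvec n ` {i \<in> Bidx n R. bvec n i \<in> Osa n k}) = Osa n k)"
proof (intro conjI ballI allI)
  fix i assume "i \<in> Bidx n R"
  then show "adj (bvec n i) = bvec n i" by (rule adj_bvec)
next
  fix i assume "i \<in> Bidx n R"
  then show "bvec n i \<in> L2 n" by (rule bvec_L2)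
next
  show "orthonormal_fam n (Bidx n R) (bvec n)"
    unfolding orthonormal_fam_def using ortho[OF assms] by blast
next
  show "cspan (bvec n ` Bidx n R) = L2 n"
  proof
    show "cspan (bvec n ` Bidx n R) \<subseteq> L2 n" by (rule cspan_L2) (use bvec_L2 in blast)
    show "L2 n \<subseteq> cspan (bvec n ` Bidx n R)" using span_L2[OF assms] by blast
  qed
next
  fix k :: nat
  show "{i \<in> Bidx n R. bvec n i \<in> Osa n k} = {i \<in> Bidx n R. bdeg_ok k i}" by (rule Osa_eq[OF assms])
  show "rspan (bvec n ` {i \<in> Bidx n R. bvec n i \<in> Osa n k}) = Osa n k" by (rule rspan_eq[OF assms])
qed


end
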